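(* Let $\{X_t\}_{t\ge 0}$ be an irreducible, positive recurrent discrete-time Markov chain on a countable state space $\mathbb{E}$ with transition matrix $P$ and invariant distribution $\boldsymbol{\pi}$, and let $\boldsymbol{g}$ be a real vector on $\mathbb{E}$ with $\boldsymbol{\pi}|\boldsymbol{g}|<\infty$. Partition $\mathbb{E}=A\cup B$ into two disjoint proper non-empty subsets, and partition accordingly $$P=\begin{bmatrix}P_A & P_{AB}\\ P_{BA} & P_B\end{bmatrix},\qquad \boldsymbol{h}=\begin{bmatrix}\boldsymbol{h}_A\\ \boldsymbol{h}_B\end{bmatrix}.$$ Let $N_B=\sum_{n=0}^\infty P_B^n$. Let $T(A)=\inf\{t\ge 1: X_t\in A\}$ and for $i\in\mathbb{E}$ let $y_i(A)={\rm E}[\sum_{0\le t<T(A)} g_{X_t}\mid X_0=i]$ and $\tau_i(A)={\rm E}[T(A)\mid X_0=i]$, with $\boldsymbol{y}_A(A),\boldsymbol{y}_B(A),\boldsymbol{\tau}_A(A),\boldsymbol{\tau}_B(A)$ the restrictions of these vectors to $A$ and $B$. Then the vector $\boldsymbol{h}$ given by $$\boldsymbol{h}_A=\boldsymbol{y}_A(A)-(\boldsymbol{\pi}\boldsymbol{g})\,\boldsymbol{\tau}_A(A)+(P_A+P_{AB}N_BP_{BA})\,\boldsymbol{h}_A$$ and $$\boldsymbol{h}_B=\boldsymbol{y}_B(A)-(\boldsymbol{\pi}\boldsymbol{g})\,\boldsymbol{\tau}_B(A)+N_BP_{BA}\,\boldsymbol{h}_A$$ is a solution of Poisson's equation $(I-P)\boldsymbol{h}=\boldsymbol{g}-\omega\boldsymbol{1}$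 with $\omega=\boldsymbol{\pi}\boldsymbol{g}$.
   Context: $\boldsymbol{1}$ denotes the all-ones column vector and $|\boldsymbol{g}|$ the componentwise absolute value of $\boldsymbol{g}$. *)

theory Defs
  imports "HOL-Probability.Probability"
begin

text \<open>Countable state space = the countable type 'a; matrices are functions 'a => 'a => real,
  matrix products are (unconditional) infinite sums.\<close>

fun mpow :: "('a \<Rightarrow> 'a \<Rightarrow> real) \<Rightarrow> nat \<Rightarrow> 'a \<Rightarrow> 'a \<Rightarrow> real" where
  "mpow P 0 = (\<lambda>i j. if i = j then 1 else 0)"
| "mpow P (Suc n) = (\<lambda>i j. \<Sum>\<^sub>\<infinity>k. mpow P n i k * P k j)"

definition stochastic_matrix :: "('a \<Rightarrow> 'a \<Rightarrow> real) \<Rightarrow> bool" where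
  "stochastic_matrix P \<longleftrightarrow> (\<forall>i j. 0 \<le> P i j) \<and> (\<forall>i. (P i has_sum 1) UNIV)"

definition irreducible_matrix :: "('a \<Rightarrow> 'a \<Rightarrow> real) \<Rightarrow> bool" where
  "irreducible_matrix P \<longleftrightarrow> (\<forall>i j. \<exists>n. mpow P n i j > 0)"

definition invariant_distribution :: "('a \<Rightarrow> 'a \<Rightarrow> real) \<Rightarrow> ('a \<Rightarrow> real) \<Rightarrow> bool" where
  "invariant_distribution P \<pi> \<longleftrightarrow> (\<forall>j. 0 \<le> \<pi> j) \<and> (\<pi> has_sum 1) UNIV \<and>
     (\<forall>j. (\<Sum>\<^sub>\<infinity>i. \<pi> i * P i j) = \<pi> j)"

text \<open>M i together with X is a realisation of the Markov chain with transition matrix P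
  started in state i (so expectations under M i are E[ . | X_0 = i]).\<close>
definition markov_chain_from ::
  "('a \<Rightarrow> 'a \<Rightarrow> real) \<Rightarrow> 'w measure \<Rightarrow> (nat \<Rightarrow> 'w \<Rightarrow> 'a) \<Rightarrow> 'a \<Rightarrow> bool" where
  "markov_chain_from P M X i \<longleftrightarrow> prob_space M \<and>
     (\<forall>t. X t \<in> measurable M (count_space UNIV)) \<and>
     (\<forall>n s. measure M {\<omega> \<in> space M. \<forall>t\<le>n. X t \<omega> = s t} =
            (if s 0 = i then (\<Prod>t<n. P (s t) (s (Suc t))) else 0))"

definition hit_time :: "'a set \<Rightarrow> (nat \<Rightarrow> 'w \<Rightarrow> 'a) \<Rightarrow> 'w \<Rightarrow> nat" where
  "hit_time A X \<omega> = (LEAST t. 1 \<le> t \<and> X t \<omega> \<in> A)"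

definition positive_recurrent ::
  "('a \<Rightarrow> 'w measure) \<Rightarrow> (nat \<Rightarrow> 'w \<Rightarrow> 'a) \<Rightarrow> bool" where
  "positive_recurrent M X \<longleftrightarrow> (\<forall>i.
     (AE \<omega> in M i. \<exists>t\<ge>1. X t \<omega> = i) \<and>
     integrable (M i) (\<lambda>\<omega>. real (hit_time {i} X \<omega>)))"

definition y_vec ::
  "('a \<Rightarrow> 'w measure) \<Rightarrow> (nat \<Rightarrow> 'w \<Rightarrow> 'a) \<Rightarrow> ('a \<Rightarrow> real) \<Rightarrow> 'a set \<Rightarrow> 'a \<Rightarrow> real" where
  "y_vec M X g A i = integral\<^sup>L (M i) (\<lambda>\<omega>. \<Sum>t<hit_time A X \<omega>. g (X t \<omega>))"

definition tau_vec ::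
  "('a \<Rightarrow> 'w measure) \<Rightarrow> (nat \<Rightarrow> 'w \<Rightarrow> 'a) \<Rightarrow> 'a set \<Rightarrow> 'a \<Rightarrow> real" where
  "tau_vec M X A i = integral\<^sup>L (M i) (\<lambda>\<omega>. real (hit_time A X \<omega>))"

text \<open>Restriction of P to B x B (the block P_B, padded with zeros) and
  N_B = sum_{n>=0} P_B^n (entries for i, j in B).\<close>
definition restr :: "('a \<Rightarrow> 'a \<Rightarrow> real) \<Rightarrow> 'a set \<Rightarrow> 'a \<Rightarrow> 'a \<Rightarrow> real" where
  "restr P B = (\<lambda>i j. if i \<in> B \<and> j \<in> B then P i j else 0)"

definition NB :: "('a \<Rightarrow> 'a \<Rightarrow> real) \<Rightarrow> 'a set \<Rightarrow> 'a \<Rightarrow> 'a \<Rightarrow> real" where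
  "NB P B i j = (\<Sum>n. mpow (restr P B) n i j)"

definition NBPBA :: "('a \<Rightarrow> 'a \<Rightarrow> real) \<Rightarrow> 'a set \<Rightarrow> 'a set \<Rightarrow> 'a \<Rightarrow> 'a \<Rightarrow> real" where
  "NBPBA P A B i k = (\<Sum>\<^sub>\<infinity>l\<in>B. NB P B i l * P l k)"

definition QA :: "('a \<Rightarrow> 'a \<Rightarrow> real) \<Rightarrow> 'a set \<Rightarrow> 'a set \<Rightarrow> 'a \<Rightarrow> 'a \<Rightarrow> real" where
  "QA P A B i k = P i k + (\<Sum>\<^sub>\<infinity>j\<in>B. P i j * NBPBA P A B j k)"

end

theory Submission
  imports Defs
begin


lemma has_sum_single':
  fixes f :: "'b \<Rightarrow> real"
  assumes "x \<in> A" "\<And>y. y \<in> A \<Longrightarrow> y \<noteq> x \<Longrightarrow> f y = 0"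
  shows "(f has_sum f x) A"
proof -
  have "(f has_sum f x) {x}" using has_sum_finite[of "{x}" f] by simp
  then show ?thesis by (rule has_sum_cong_neutral[THEN iffD1, rotated -1]) (use assms in auto)
qed

lemma has_sum_sum':
  fixes f :: "'t \<Rightarrow> 'b \<Rightarrow> real"
  assumes "finite I" "\<And>t. t \<in> I \<Longrightarrow> (f t has_sum s t) A"
  shows "((\<lambda>x. \<Sum>t\<in>I. f t x) has_sum (\<Sum>t\<in>I. s t)) A"
  using assms
proof (induction I rule: finite_induct)
  case empty then show ?case by simp
next
  case (insert a F)
  then show ?case by (simp add: has_sum_add)
qed

lemma has_sum_ge_term:
  fixes f :: "'b \<Rightarrow> real"
  assumes "(f has_sum S) A" "x \<in> A" "\<And>y. y \<in> A \<Longrightarrow> 0 \<le> f y"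
  shows "f x \<le> S"
  using finite_sum_le_has_sum[OF assms(1), of "{x}"] assms by auto

lemma tonelli:
  fixes F :: "'x \<Rightarrow> 'y \<Rightarrow> real" and G :: "'x \<Rightarrow> real" and S :: real and A :: "'x set" and B :: "'y set"
  assumes nn: "\<And>x y. x \<in> A \<Longrightarrow> y \<in> B \<Longrightarrow> 0 \<le> F x y"
    and inner: "\<And>x. x \<in> A \<Longrightarrow> (F x has_sum G x) B" and outer: "(G has_sum S) A"
  shows "\<And>y. y \<in> B \<Longrightarrow> (\<lambda>x. F x y) summable_on A"
    and "((\<lambda>y. \<Sum>\<^sub>\<infinity>x\<in>A. F x y) has_sum S) B"
proof -
  have sm: "(\<lambda>(x,y). F x y) summable_on Sigma A (\<lambda>_. B)"
    by (rule summable_on_SigmaI[where g=G]) (use inner outer nn in \<open>auto simp: summable_on_def\<close>)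
  have hs: "((\<lambda>(x,y). F x y) has_sum S) (A \<times> B)"
    by (rule has_sum_SigmaI[where g=G]) (use inner outer sm in auto)
  have hs2: "((\<lambda>(y,x). F x y) has_sum S) (B \<times> A)"
    using hs has_sum_swap[where f="\<lambda>(x,y). F x y" and A=A and B=B] by (simp add: case_prod_unfold)
  show sy: "\<And>y. y \<in> B \<Longrightarrow> (\<lambda>x. F x y) summable_on A"
    using summable_on_SigmaD1[of "\<lambda>y x. F x y" B "\<lambda>_. A"] hs2 by (auto simp: summable_on_def)
  show "((\<lambda>y. \<Sum>\<^sub>\<infinity>x\<in>A. F x y) has_sum S) B"
    by (rule has_sum_SigmaD[OF hs2]) (use sy in auto)
qed

lemma fubini:
  fixes F :: "'x \<Rightarrow> 'y \<Rightarrow> real"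
  assumes i: "\<And>x. x \<in> A \<Longrightarrow> (\<lambda>y. \<bar>F x y\<bar>) summable_on B"
    and o: "(\<lambda>x. \<Sum>\<^sub>\<infinity>y\<in>B. \<bar>F x y\<bar>) summable_on A"
  shows fub_in: "\<And>x. x \<in> A \<Longrightarrow> F x summable_on B"
    and fub_o: "(\<lambda>x. \<Sum>\<^sub>\<infinity>y\<in>B. F x y) summable_on A"
    and fub_i2: "\<And>y. y \<in> B \<Longrightarrow> (\<lambda>x. F x y) summable_on A"
    and fub_hs: "((\<lambda>y. \<Sum>\<^sub>\<infinity>x\<in>A. F x y) has_sum (\<Sum>\<^sub>\<infinity>x\<in>A. \<Sum>\<^sub>\<infinity>y\<in>B. F x y)) B"
    and fub_ai2: "\<And>y. y \<in> B \<Longrightarrow> (\<lambda>x. \<bar>F x y\<bar>) summable_on A"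
    and fub_ao2: "(\<lambda>y. \<Sum>\<^sub>\<infinity>x\<in>A. \<bar>F x y\<bar>) summable_on B"
proof -
  have smabs: "(\<lambda>(x,y). \<bar>F x y\<bar>) summable_on Sigma A (\<lambda>_. B)"
    by (rule summable_on_SigmaI[where g="\<lambda>x. \<Sum>\<^sub>\<infinity>y\<in>B. \<bar>F x y\<bar>"]) (use i o in auto)
  then have "Infinite_Sum.abs_summable_on (\<lambda>(x,y). F x y) (Sigma A (\<lambda>_. B))"
    by (simp add: case_prod_unfold)
  then have sm: "(\<lambda>(x,y). F x y) summable_on Sigma A (\<lambda>_. B)" by (rule abs_summable_summable)
  show fi: "\<And>x. x \<in> A \<Longrightarrow> F x summable_on B"
  proof -
    fix x assume "x \<in> A"
    then have "(\<lambda>y. norm (F x y)) summable_on B" using i by simp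
    then show "F x summable_on B" by (rule abs_summable_summable)
  qed
  show fo: "(\<lambda>x. \<Sum>\<^sub>\<infinity>y\<in>B. F x y) summable_on A"
  proof -
    have fi': "\<And>x. x\<in>A \<Longrightarrow> (\<lambda>y. (\<lambda>(x,y). F x y) (x,y)) summable_on B" using fi by simp
    from summable_on_SigmaD[OF sm fi'] show ?thesis by simp
  qed
  have in1: "\<And>x. x\<in>A \<Longrightarrow> ((\<lambda>y. (\<lambda>(x,y). F x y) (x,y)) has_sum (\<Sum>\<^sub>\<infinity>y\<in>B. F x y)) B"
    using fi by (simp add: has_sum_infsum)
  have out1: "((\<lambda>x. \<Sum>\<^sub>\<infinity>y\<in>B. F x y) has_sum (\<Sum>\<^sub>\<infinity>x\<in>A. \<Sum>\<^sub>\<infinity>y\<in>B. F x y)) A"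
    using fo by (rule has_sum_infsum)
  have hs: "((\<lambda>(x,y). F x y) has_sum (\<Sum>\<^sub>\<infinity>x\<in>A. \<Sum>\<^sub>\<infinity>y\<in>B. F x y)) (Sigma A (\<lambda>_. B))"
    by (rule has_sum_SigmaI[OF in1 out1 sm])
  have hs2: "((\<lambda>(y,x). F x y) has_sum (\<Sum>\<^sub>\<infinity>x\<in>A. \<Sum>\<^sub>\<infinity>y\<in>B. F x y)) (B \<times> A)"
    using hs has_sum_swap[where f="\<lambda>(x,y). F x y" and A=A and B=B] by (simp add: case_prod_unfold)
  show sy: "\<And>y. y \<in> B \<Longrightarrow> (\<lambda>x. F x y) summable_on A"
    using summable_on_SigmaD1[of "\<lambda>y x. F x y" B "\<lambda>_. A"] hs2 by (auto simp: summable_on_def)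
  show "((\<lambda>y. \<Sum>\<^sub>\<infinity>x\<in>A. F x y) has_sum (\<Sum>\<^sub>\<infinity>x\<in>A. \<Sum>\<^sub>\<infinity>y\<in>B. F x y)) B"
    by (rule has_sum_SigmaD[OF hs2]) (use sy in auto)
  have in2: "\<And>x. x\<in>A \<Longrightarrow> ((\<lambda>y. (\<lambda>(x,y). \<bar>F x y\<bar>) (x,y)) has_sum (\<Sum>\<^sub>\<infinity>y\<in>B. \<bar>F x y\<bar>)) B"
    using i by (simp add: has_sum_infsum)
  have out2: "((\<lambda>x. \<Sum>\<^sub>\<infinity>y\<in>B. \<bar>F x y\<bar>) has_sum (\<Sum>\<^sub>\<infinity>x\<in>A. \<Sum>\<^sub>\<infinity>y\<in>B. \<bar>F x y\<bar>)) A"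
    using o by (rule has_sum_infsum)
  have ha: "((\<lambda>(x,y). \<bar>F x y\<bar>) has_sum (\<Sum>\<^sub>\<infinity>x\<in>A. \<Sum>\<^sub>\<infinity>y\<in>B. \<bar>F x y\<bar>)) (Sigma A (\<lambda>_. B))"
    by (rule has_sum_SigmaI[OF in2 out2 smabs])
  have ha2: "((\<lambda>(y,x). \<bar>F x y\<bar>) has_sum (\<Sum>\<^sub>\<infinity>x\<in>A. \<Sum>\<^sub>\<infinity>y\<in>B. \<bar>F x y\<bar>)) (B \<times> A)"
    using ha has_sum_swap[where f="\<lambda>(x,y). \<bar>F x y\<bar>" and A=A and B=B] by (simp add: case_prod_unfold)
  show say: "\<And>y. y \<in> B \<Longrightarrow> (\<lambda>x. \<bar>F x y\<bar>) summable_on A"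
    using summable_on_SigmaD1[of "\<lambda>y x. \<bar>F x y\<bar>" B "\<lambda>_. A"] ha2 by (auto simp: summable_on_def)
  show "(\<lambda>y. \<Sum>\<^sub>\<infinity>x\<in>A. \<bar>F x y\<bar>) summable_on B"
  proof -
    have "((\<lambda>y. \<Sum>\<^sub>\<infinity>x\<in>A. \<bar>F x y\<bar>) has_sum (\<Sum>\<^sub>\<infinity>x\<in>A. \<Sum>\<^sub>\<infinity>y\<in>B. \<bar>F x y\<bar>)) B"
      by (rule has_sum_SigmaD[OF ha2]) (use say in \<open>simp add: has_sum_infsum\<close>)
    then show ?thesis by (auto simp: summable_on_def)
  qed
qed

lemma nat_abs_infsum:
  fixes a :: "nat \<Rightarrow> real"
  assumes "summable (\<lambda>n. \<bar>a n\<bar>)"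
  shows "(\<lambda>n. \<bar>a n\<bar>) summable_on UNIV" "a summable_on UNIV" "suminf a = infsum a UNIV" "summable a"
proof -
  show s1: "(\<lambda>n. \<bar>a n\<bar>) summable_on UNIV" by (rule summable_nonneg_imp_summable_on) (use assms in auto)
  then have "(\<lambda>n. norm (a n)) summable_on UNIV" by simp
  then show s2: "a summable_on UNIV" by (rule abs_summable_summable)
  then have "a sums infsum a UNIV" by (intro has_sum_imp_sums) auto
  then show "suminf a = infsum a UNIV" "summable a" by (auto simp: sums_iff)
qed

lemma nat_nn_infsum:
  fixes a :: "nat \<Rightarrow> real"
  assumes "summable a" "\<And>n. 0 \<le> a n"
  shows "(a has_sum suminf a) UNIV"
proof -
  have "a summable_on UNIV" by (rule summable_nonneg_imp_summable_on) (use assms in auto)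
  then have "a sums infsum a UNIV" by (intro has_sum_imp_sums) auto
  then show ?thesis using \<open>a summable_on UNIV\<close> by (metis has_sum_infsum sums_unique)
qed




lemma nn_count_has_sum:
  fixes f :: "'b \<Rightarrow> real"
  assumes nn: "\<And>x. x\<in>I \<Longrightarrow> 0 \<le> f x" and eq: "(\<integral>\<^sup>+x. ennreal (f x) \<partial>count_space I) = ennreal r" and r: "0 \<le> r"
  shows "(f has_sum r) I"
proof -
  have int: "integrable (count_space I) f"
    by (rule integrableI_nn_integral_finite[OF _ _ eq]) (auto simp: AE_count_space nn)
  then have abs: "Infinite_Set_Sum.abs_summable_on f I" by (simp add: abs_summable_on_def)
  have "infsetsum f I = r"
    unfolding infsetsum_def using nn eq r
    by (subst integral_eq_nn_integral) (auto simp: AE_count_space)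
  moreover have "f summable_on I"
  proof -
    have "(\<lambda>x. norm (f x)) summable_on I" using abs abs_summable_equivalent by blast
    then show ?thesis by (rule summable_on_cong[THEN iffD1, rotated]) (use nn in auto)
  qed
  ultimately show ?thesis using infsetsum_infsum[OF abs] by (metis has_sum_infsum)
qed

lemma nn_count_infsum:
  fixes f :: "'b \<Rightarrow> real"
  assumes nn: "\<And>x. x\<in>I \<Longrightarrow> 0 \<le> f x" and s: "f summable_on I"
  shows "(\<integral>\<^sup>+x. ennreal (f x) \<partial>count_space I) = ennreal (infsum f I)"
proof -
  have "(\<lambda>x. norm (f x)) summable_on I" using s by (rule summable_on_cong[THEN iffD1, rotated]) (use nn in auto)
  then have abs: "Infinite_Set_Sum.abs_summable_on f I" using abs_summable_equivalent by blast
  show ?thesis using nn_integral_conv_infsetsum[OF abs] nn infsetsum_infsum[OF abs] by simp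
qed

lemma CA:
  assumes fm: "finite_measure M" and sets: "\<And>l. l\<in>I \<Longrightarrow> E l \<in> sets M" and I: "countable I"
    and dj: "disjoint_family_on E I"
  shows "((\<lambda>l. measure M (E l)) has_sum measure M (\<Union>l\<in>I. E l)) I"
proof (rule nn_count_has_sum)
  have "emeasure M (\<Union>(E ` I)) = (\<integral>\<^sup>+i. emeasure M (E i) \<partial>count_space I)"
    by (rule emeasure_UN_countable[OF sets I dj])
  then show "(\<integral>\<^sup>+l. ennreal (measure M (E l)) \<partial>count_space I) = ennreal (measure M (\<Union>l\<in>I. E l))"
    using fm by (simp add: finite_measure.emeasure_eq_measure)
qed auto

lemma has_sum_diff':
  fixes f g :: "'b \<Rightarrow> real"
  assumes "(f has_sum a) A" "(g has_sum b) A"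
  shows "((\<lambda>x. f x - g x) has_sum (a - b)) A"
  using has_sum_add[OF assms(1) has_sum_uminusI[OF assms(2)]] by simp

lemma EXPnn:
  fixes Y :: "'w \<Rightarrow> 'b::countable" and \<phi> :: "'b \<Rightarrow> real"
  assumes fm: "finite_measure M" and Ym[measurable]: "Y \<in> measurable M (count_space UNIV)"
    and nn: "\<And>l. 0 \<le> \<phi> l" and s: "(\<lambda>l. \<phi> l * measure M {\<omega>\<in>space M. Y \<omega> = l}) summable_on UNIV"
  shows "integrable M (\<lambda>\<omega>. \<phi> (Y \<omega>))"
    "integral\<^sup>L M (\<lambda>\<omega>. \<phi> (Y \<omega>)) = (\<Sum>\<^sub>\<infinity>l. \<phi> l * measure M {\<omega>\<in>space M. Y \<omega> = l})"
proof -
  have meas: "(\<lambda>\<omega>. \<phi> (Y \<omega>)) \<in> borel_measurable M" by measurable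
  have sets: "{\<omega>\<in>space M. Y \<omega> = l} \<in> sets M" for l by measurable
  have "(\<integral>\<^sup>+\<omega>. ennreal (\<phi> (Y \<omega>)) \<partial>M) =
     (\<integral>\<^sup>+\<omega>. \<integral>\<^sup>+l. ennreal (\<phi> l) * indicator {\<omega>\<in>space M. Y \<omega> = l} \<omega> \<partial>count_space UNIV \<partial>M)"
  proof (rule nn_integral_cong)
    fix x assume x: "x \<in> space M"
    show "ennreal (\<phi> (Y x)) = (\<integral>\<^sup>+l. ennreal (\<phi> l) * indicator {\<omega>\<in>space M. Y \<omega> = l} x \<partial>count_space UNIV)"
      by (subst nn_integral_count_space'[where A="{Y x}"]) (use x in \<open>auto simp: indicator_def\<close>)
  qed
  also have "\<dots> = (\<integral>\<^sup>+l. \<integral>\<^sup>+\<omega>. ennreal (\<phi> l) * indicator {\<omega>\<in>space M. Y \<omega> = l} \<omega> \<partial>M \<partial>count_space UNIV)"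
    by (rule nn_integral_count_space_nn_integral) auto
  also have "\<dots> = (\<integral>\<^sup>+l. ennreal (\<phi> l * measure M {\<omega>\<in>space M. Y \<omega> = l}) \<partial>count_space UNIV)"
    by (rule nn_integral_cong)
       (simp add: nn_integral_cmult_indicator[OF sets] finite_measure.emeasure_eq_measure[OF fm] ennreal_mult nn)
  also have "\<dots> = ennreal (\<Sum>\<^sub>\<infinity>l. \<phi> l * measure M {\<omega>\<in>space M. Y \<omega> = l})"
    by (rule nn_count_infsum) (auto simp: nn s)
  finally have eq: "(\<integral>\<^sup>+\<omega>. ennreal (\<phi> (Y \<omega>)) \<partial>M) = ennreal (\<Sum>\<^sub>\<infinity>l. \<phi> l * measure M {\<omega>\<in>space M. Y \<omega> = l})" .
  show "integrable M (\<lambda>\<omega>. \<phi> (Y \<omega>))"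
    by (rule integrableI_nn_integral_finite[OF meas _ eq]) (auto simp: nn)
  have "0 \<le> (\<Sum>\<^sub>\<infinity>l. \<phi> l * measure M {\<omega>\<in>space M. Y \<omega> = l})"
    by (rule infsum_nonneg) (simp add: nn)
  then show "integral\<^sup>L M (\<lambda>\<omega>. \<phi> (Y \<omega>)) = (\<Sum>\<^sub>\<infinity>l. \<phi> l * measure M {\<omega>\<in>space M. Y \<omega> = l})"
    by (subst integral_eq_nn_integral[OF meas]) (auto simp: nn eq)
qed

lemma EXP:
  fixes Y :: "'w \<Rightarrow> 'b::countable" and \<phi> :: "'b \<Rightarrow> real"
  assumes fm: "finite_measure M" and Ym[measurable]: "Y \<in> measurable M (count_space UNIV)"
    and s: "(\<lambda>l. \<bar>\<phi> l\<bar> * measure M {\<omega>\<in>space M. Y \<omega> = l}) summable_on UNIV"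
  shows "integrable M (\<lambda>\<omega>. \<phi> (Y \<omega>))"
    "((\<lambda>l. \<phi> l * measure M {\<omega>\<in>space M. Y \<omega> = l}) has_sum integral\<^sup>L M (\<lambda>\<omega>. \<phi> (Y \<omega>))) UNIV"
proof -
  define p where "p l = max (\<phi> l) 0" for l
  define n where "n l = max (- \<phi> l) 0" for l
  have mnn: "0 \<le> measure M {\<omega>\<in>space M. Y \<omega> = l}" for l by simp
  have sp: "(\<lambda>l. p l * measure M {\<omega>\<in>space M. Y \<omega> = l}) summable_on UNIV"
    by (rule summable_on_comparison_test[OF s]) (auto simp: p_def mult_right_mono mnn)
  have sn: "(\<lambda>l. n l * measure M {\<omega>\<in>space M. Y \<omega> = l}) summable_on UNIV"
    by (rule summable_on_comparison_test[OF s]) (auto simp: n_def mult_right_mono mnn)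
  note P = EXPnn[OF fm Ym _ sp] and N = EXPnn[OF fm Ym _ sn]
  have eqf: "\<phi> l = p l - n l" for l by (simp add: p_def n_def)
  have Pi: "integrable M (\<lambda>\<omega>. p (Y \<omega>))" using P(1) by (simp add: p_def)
  have Ni: "integrable M (\<lambda>\<omega>. n (Y \<omega>))" using N(1) by (simp add: n_def)
  show "integrable M (\<lambda>\<omega>. \<phi> (Y \<omega>))"
    unfolding eqf using Pi Ni by (rule Bochner_Integration.integrable_diff)
  have "integral\<^sup>L M (\<lambda>\<omega>. \<phi> (Y \<omega>)) = integral\<^sup>L M (\<lambda>\<omega>. p (Y \<omega>)) - integral\<^sup>L M (\<lambda>\<omega>. n (Y \<omega>))"
    unfolding eqf using Pi Ni by (rule Bochner_Integration.integral_diff)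
  also have "\<dots> = (\<Sum>\<^sub>\<infinity>l. p l * measure M {\<omega>\<in>space M. Y \<omega> = l}) - (\<Sum>\<^sub>\<infinity>l. n l * measure M {\<omega>\<in>space M. Y \<omega> = l})"
    using P N by (auto simp: p_def n_def)
  finally have v: "integral\<^sup>L M (\<lambda>\<omega>. \<phi> (Y \<omega>)) = \<dots>" .
  have "((\<lambda>l. p l * measure M {\<omega>\<in>space M. Y \<omega> = l} - n l * measure M {\<omega>\<in>space M. Y \<omega> = l}) has_sum
     integral\<^sup>L M (\<lambda>\<omega>. \<phi> (Y \<omega>))) UNIV"
    unfolding v by (rule has_sum_diff') (use sp sn in auto)
  then show "((\<lambda>l. \<phi> l * measure M {\<omega>\<in>space M. Y \<omega> = l}) has_sum integral\<^sup>L M (\<lambda>\<omega>. \<phi> (Y \<omega>))) UNIV"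
    by (rule has_sum_cong[THEN iffD1, rotated]) (simp add: eqf left_diff_distrib)
qed

locale mc =
  fixes P :: "'a::countable \<Rightarrow> 'a \<Rightarrow> real" and M :: "'a \<Rightarrow> 'w measure" and X :: "nat \<Rightarrow> 'w \<Rightarrow> 'a"
  assumes stoch: "stochastic_matrix P"
    and chain: "\<And>i. markov_chain_from P (M i) X i"
begin

lemma ps: "prob_space (M i)" using chain[of i] by (simp add: markov_chain_from_def)
lemma fm: "finite_measure (M i)" using ps prob_space.finite_measure by blast
lemma Xm[measurable]: "X t \<in> measurable (M i) (count_space UNIV)" using chain[of i] by (simp add: markov_chain_from_def)
lemma cyl: "measure (M i) {\<omega> \<in> space (M i). \<forall>t\<le>n. X t \<omega> = s t} =
            (if s 0 = i then (\<Prod>t<n. P (s t) (s (Suc t))) else 0)"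
  using chain[of i] by (simp add: markov_chain_from_def)
lemma Pnn: "0 \<le> P a b" using stoch by (simp add: stochastic_matrix_def)
lemma Prow: "(P a has_sum 1) UNIV" using stoch by (simp add: stochastic_matrix_def)

definition pl :: "nat \<Rightarrow> 'w \<Rightarrow> 'a list" where "pl n \<omega> = map (\<lambda>t. X t \<omega>) [0..<Suc n]"

lemma pl_nth: "t \<le> n \<Longrightarrow> pl n \<omega> ! t = X t \<omega>" by (simp add: pl_def nth_map del: upt_Suc)
lemma pl_len[simp]: "length (pl n \<omega>) = Suc n" by (simp add: pl_def del: upt_Suc)
lemma pl_Suc: "pl (Suc n) \<omega> = pl n \<omega> @ [X (Suc n) \<omega>]" by (simp add: pl_def)

lemma pl_pre: "length xs = Suc n \<Longrightarrow> pl n -` {xs} \<inter> space (M i) = {\<omega>\<in>space (M i). \<forall>t\<le>n. X t \<omega> = xs ! t}"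
  by (auto simp: list_eq_iff_nth_eq less_Suc_eq_le pl_nth)

lemma pl_meas[measurable]: "pl n \<in> measurable (M i) (count_space UNIV)"
proof (subst measurable_count_space_eq2_countable, safe)
  fix xs :: "'a list"
  have "pl n -` {xs} \<inter> space (M i) = (if length xs = Suc n then {\<omega>\<in>space (M i). \<forall>t\<in>{..n}. X t \<omega> = xs ! t} else {})"
    using pl_pre[of xs n i] by auto
  also have "\<dots> \<in> sets (M i)"
  proof -
    have "{\<omega>\<in>space (M i). \<forall>t\<in>{..n}. X t \<omega> = xs ! t} \<in> sets (M i)" by measurable
    then show ?thesis by simp
  qed
  finally show "pl n -` {xs} \<inter> space (M i) \<in> sets (M i)" .
qed simp

lemma pl_sets[measurable]: "{\<omega>\<in>space (M i). \<Phi> (pl n \<omega>)} \<in> sets (M i)"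
  by measurable

definition w :: "'a \<Rightarrow> 'a list \<Rightarrow> real" where
  "w i xs = (if xs ! 0 = i then (\<Prod>t<length xs - 1. P (xs ! t) (xs ! Suc t)) else 0)"

lemma pl_cyl: "length xs = Suc n \<Longrightarrow> measure (M i) {\<omega>\<in>space (M i). pl n \<omega> = xs} = w i xs"
proof -
  assume l: "length xs = Suc n"
  have "{\<omega>\<in>space (M i). pl n \<omega> = xs} = {\<omega>\<in>space (M i). \<forall>t\<le>n. X t \<omega> = xs ! t}"
    using pl_pre[OF l, of i] by auto
  then show ?thesis using l by (simp add: cyl w_def)
qed

lemma EV: "((\<lambda>xs. w i xs) has_sum measure (M i) {\<omega>\<in>space (M i). \<Phi> (pl n \<omega>)}) {xs. length xs = Suc n \<and> \<Phi> xs}"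
proof -
  let ?I = "{xs. length xs = Suc n \<and> \<Phi> xs}"
  have h: "((\<lambda>xs. measure (M i) {\<omega>\<in>space (M i). pl n \<omega> = xs}) has_sum
        measure (M i) (\<Union>xs\<in>?I. {\<omega>\<in>space (M i). pl n \<omega> = xs})) ?I"
    by (rule CA[OF fm]) (auto simp: disjoint_family_on_def)
  have eq: "(\<Union>xs\<in>?I. {\<omega>\<in>space (M i). pl n \<omega> = xs}) = {\<omega>\<in>space (M i). \<Phi> (pl n \<omega>)}" by auto
  from h[unfolded eq] show ?thesis
    by (rule has_sum_cong[THEN iffD1, rotated]) (auto simp: pl_cyl)
qed

lemma w_app: "xs \<noteq> [] \<Longrightarrow> w i (xs @ [l]) = w i xs * P (last xs) l"
proof -
  assume "xs \<noteq> []"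
  then obtain m where m: "length xs = Suc m" by (cases xs) auto
  have 1: "(xs @ [l]) ! 0 = xs ! 0" using m by (simp add: nth_append)
  have "(\<Prod>t<Suc m. P ((xs @ [l]) ! t) ((xs @ [l]) ! Suc t)) =
        (\<Prod>t<m. P (xs ! t) (xs ! Suc t)) * P (xs ! m) l"
    using m by (simp add: nth_append)
  moreover have "last xs = xs ! m" using m \<open>xs \<noteq> []\<close> by (simp add: last_conv_nth)
  ultimately show ?thesis using m 1 by (simp add: w_def)
qed

lemma MS: "measure (M i) {\<omega>\<in>space (M i). \<Phi> (pl n \<omega>) \<and> X n \<omega> = l \<and> X (Suc n) \<omega> = l'} =
           measure (M i) {\<omega>\<in>space (M i). \<Phi> (pl n \<omega>) \<and> X n \<omega> = l} * P l l'"
proof -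
  let ?S = "{xs. length xs = Suc n \<and> (\<Phi> xs \<and> xs ! n = l)}"
  let ?S' = "{ys. length ys = Suc (Suc n) \<and> (\<Phi> (butlast ys) \<and> ys ! n = l \<and> last ys = l')}"
  have e1: "{\<omega>\<in>space (M i). \<Phi> (pl n \<omega>) \<and> X n \<omega> = l \<and> X (Suc n) \<omega> = l'} =
            {\<omega>\<in>space (M i). (\<lambda>ys. \<Phi> (butlast ys) \<and> ys ! n = l \<and> last ys = l') (pl (Suc n) \<omega>)}"
    by (auto simp: pl_Suc nth_append pl_nth)
  have e2: "{\<omega>\<in>space (M i). \<Phi> (pl n \<omega>) \<and> X n \<omega> = l} =
            {\<omega>\<in>space (M i). (\<lambda>xs. \<Phi> xs \<and> xs ! n = l) (pl n \<omega>)}"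
    by (auto simp: pl_nth)
  have h1: "(w i has_sum measure (M i) {\<omega>\<in>space (M i). \<Phi> (pl n \<omega>) \<and> X n \<omega> = l \<and> X (Suc n) \<omega> = l'}) ?S'"
    unfolding e1 by (rule EV)
  have h2: "((\<lambda>xs. w i xs * P l l') has_sum measure (M i) {\<omega>\<in>space (M i). \<Phi> (pl n \<omega>) \<and> X n \<omega> = l} * P l l') ?S"
    unfolding e2 by (rule has_sum_cmult_left, rule EV)
  have bij: "bij_betw (\<lambda>xs. xs @ [l']) ?S ?S'"
  proof (rule bij_betwI[where g=butlast])
    show "(\<lambda>xs. xs @ [l']) \<in> ?S \<rightarrow> ?S'" by (auto simp: nth_append)
    show "butlast \<in> ?S' \<rightarrow> ?S"
    proof
      fix ys assume ys: "ys \<in> ?S'"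
      then have "ys = butlast ys @ [l']" by (metis (mono_tags, lifting) append_butlast_last_id list.size(3) mem_Collect_eq nat.distinct(1))
      with ys show "butlast ys \<in> ?S" by (auto simp: nth_append) (metis nth_append lessI length_butlast diff_Suc_1)
    qed
    show "\<And>x. x \<in> ?S \<Longrightarrow> butlast (x @ [l']) = x" by simp
    show "\<And>y. y \<in> ?S' \<Longrightarrow> butlast y @ [l'] = y"
      by (metis (mono_tags, lifting) append_butlast_last_id list.size(3) mem_Collect_eq nat.distinct(1))
  qed
  have "((\<lambda>xs. w i (xs @ [l'])) has_sum measure (M i) {\<omega>\<in>space (M i). \<Phi> (pl n \<omega>) \<and> X n \<omega> = l \<and> X (Suc n) \<omega> = l'}) ?S"
    using has_sum_reindex_bij_betw[OF bij] h1 by blast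
  moreover have "\<And>xs. xs \<in> ?S \<Longrightarrow> w i (xs @ [l']) = w i xs * P l l'"
  proof -
    fix xs assume xs: "xs \<in> ?S"
    then have "xs \<noteq> []" by auto
    moreover from xs \<open>xs \<noteq> []\<close> have "last xs = l" by (auto simp: last_conv_nth)
    ultimately show "w i (xs @ [l']) = w i xs * P l l'" by (simp add: w_app)
  qed
  ultimately have "((\<lambda>xs. w i xs * P l l') has_sum measure (M i) {\<omega>\<in>space (M i). \<Phi> (pl n \<omega>) \<and> X n \<omega> = l \<and> X (Suc n) \<omega> = l'}) ?S"
    by (rule has_sum_cong[THEN iffD1, rotated -1]) auto
  from has_sum_unique[OF this h2] show ?thesis .
qed

definition q :: "'a set \<Rightarrow> 'a \<Rightarrow> nat \<Rightarrow> 'a \<Rightarrow> real" where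
  "q B i n l = measure (M i) {\<omega>\<in>space (M i). (\<forall>t\<in>{1..n}. X t \<omega> \<in> B) \<and> X n \<omega> = l}"

lemma q_nn: "0 \<le> q B i n l" by (simp add: q_def)

lemma q0: "q B i 0 l = (if l = i then 1 else 0)"
proof -
  have "{\<omega>\<in>space (M i). (\<forall>t\<in>{1..0::nat}. X t \<omega> \<in> B) \<and> X 0 \<omega> = l} = {\<omega>\<in>space (M i). \<forall>t\<le>0. X t \<omega> = (\<lambda>_. l) t}"
    by auto
  moreover have "measure (M i) {\<omega>\<in>space (M i). \<forall>t\<le>0. X t \<omega> = (\<lambda>_. l) t} = (if l = i then 1 else 0)"
    by (subst cyl) simp
  ultimately show ?thesis by (simp add: q_def)
qed

lemma q_notB: "l \<notin> B \<Longrightarrow> q B i (Suc n) l = 0"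
proof -
  assume "l \<notin> B"
  then have e: "{\<omega>\<in>space (M i). (\<forall>t\<in>{1..Suc n}. X t \<omega> \<in> B) \<and> X (Suc n) \<omega> = l} = {}" by auto
  show ?thesis unfolding q_def e by simp
qed

lemma QS: assumes "l' \<in> B" shows "((\<lambda>l. q B i n l * P l l') has_sum q B i (Suc n) l') UNIV"
proof -
  define \<Phi> where "\<Phi> xs = (\<forall>t\<in>{1..n}. xs ! t \<in> B)" for xs
  let ?E = "\<lambda>l. {\<omega>\<in>space (M i). \<Phi> (pl n \<omega>) \<and> X n \<omega> = l \<and> X (Suc n) \<omega> = l'}"
  have ev: "{\<omega>\<in>space (M i). \<Phi> (pl n \<omega>) \<and> X n \<omega> = l} = {\<omega>\<in>space (M i). (\<forall>t\<in>{1..n}. X t \<omega> \<in> B) \<and> X n \<omega> = l}" for l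
    by (auto simp: \<Phi>_def pl_nth)
  have h: "((\<lambda>l. measure (M i) (?E l)) has_sum measure (M i) (\<Union>l\<in>UNIV. ?E l)) UNIV"
    by (rule CA[OF fm]) (auto simp: disjoint_family_on_def)
  have "(\<Union>l\<in>UNIV. ?E l) = {\<omega>\<in>space (M i). (\<forall>t\<in>{1..Suc n}. X t \<omega> \<in> B) \<and> X (Suc n) \<omega> = l'}"
    using assms by (auto simp: \<Phi>_def pl_nth le_Suc_eq)
  with h have "((\<lambda>l. measure (M i) (?E l)) has_sum q B i (Suc n) l') UNIV" by (simp add: q_def)
  then show ?thesis
    by (rule has_sum_cong[THEN iffD1, rotated]) (simp add: MS ev q_def)
qed

lemma q_tot: "((\<lambda>l. q B i n l) has_sum measure (M i) {\<omega>\<in>space (M i). \<forall>t\<in>{1..n}. X t \<omega> \<in> B}) UNIV"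
proof -
  let ?E = "\<lambda>l. {\<omega>\<in>space (M i). (\<forall>t\<in>{1..n}. X t \<omega> \<in> B) \<and> X n \<omega> = l}"
  have h: "((\<lambda>l. measure (M i) (?E l)) has_sum measure (M i) (\<Union>l\<in>UNIV. ?E l)) UNIV"
    by (rule CA[OF fm]) (auto simp: disjoint_family_on_def)
  have "(\<Union>l\<in>UNIV. ?E l) = {\<omega>\<in>space (M i). \<forall>t\<in>{1..n}. X t \<omega> \<in> B}" by auto
  with h show ?thesis by (simp add: q_def)
qed

end



context mc begin

lemma QSg: "((\<lambda>l. q B i n l * P l k) has_sum
   measure (M i) {\<omega>\<in>space (M i). (\<forall>t\<in>{1..n}. X t \<omega> \<in> B) \<and> X n \<omega> \<in> L \<and> X (Suc n) \<omega> = k}) L"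
proof -
  define \<Phi> where "\<Phi> xs = (\<forall>t\<in>{1..n}. xs ! t \<in> B)" for xs
  let ?E = "\<lambda>l. {\<omega>\<in>space (M i). \<Phi> (pl n \<omega>) \<and> X n \<omega> = l \<and> X (Suc n) \<omega> = k}"
  have ev: "{\<omega>\<in>space (M i). \<Phi> (pl n \<omega>) \<and> X n \<omega> = l} = {\<omega>\<in>space (M i). (\<forall>t\<in>{1..n}. X t \<omega> \<in> B) \<and> X n \<omega> = l}" for l
    by (auto simp: \<Phi>_def pl_nth)
  have h: "((\<lambda>l. measure (M i) (?E l)) has_sum measure (M i) (\<Union>l\<in>L. ?E l)) L"
    by (rule CA[OF fm]) (auto simp: disjoint_family_on_def)
  have "(\<Union>l\<in>L. ?E l) = {\<omega>\<in>space (M i). (\<forall>t\<in>{1..n}. X t \<omega> \<in> B) \<and> X n \<omega> \<in> L \<and> X (Suc n) \<omega> = k}"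
    by (auto simp: \<Phi>_def pl_nth)
  with h have "((\<lambda>l. measure (M i) (?E l)) has_sum
     measure (M i) {\<omega>\<in>space (M i). (\<forall>t\<in>{1..n}. X t \<omega> \<in> B) \<and> X n \<omega> \<in> L \<and> X (Suc n) \<omega> = k}) L" by simp
  then show ?thesis
    by (rule has_sum_cong[THEN iffD1, rotated]) (simp add: MS ev q_def)
qed

lemma q_le1: "q B i n l \<le> 1"
  unfolding q_def using ps by (simp add: prob_space.prob_le_1)

lemma q1: "q B i (Suc 0) l = (if l \<in> B then P i l else 0)"
proof (cases "l \<in> B")
  case True
  have "((\<lambda>m. q B i 0 m * P m l) has_sum q B i (Suc 0) l) UNIV" by (rule QS[OF True])
  moreover have "((\<lambda>m. q B i 0 m * P m l) has_sum (q B i 0 i * P i l)) UNIV"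
    by (rule has_sum_single') (auto simp: q0)
  ultimately show ?thesis using True by (simp add: has_sum_unique q0)
qed (simp add: q_notB)

lemma q_out: "l \<notin> B \<Longrightarrow> (n = 0 \<Longrightarrow> l \<noteq> i) \<Longrightarrow> q B i n l = 0"
  by (cases n) (auto simp: q0 q_notB)

lemma FS: "((\<lambda>j. P i j * q B j n l) has_sum q B i (Suc n) l) B"
proof (induction n arbitrary: l)
  case 0
  show ?case
  proof (cases "l \<in> B")
    case True
    have "((\<lambda>j. P i j * q B j 0 l) has_sum (P i l * q B l 0 l)) B"
      by (rule has_sum_single'[OF True]) (auto simp: q0)
    then show ?thesis using True by (simp add: q0 q1)
  next
    case False
    have "((\<lambda>j. P i j * q B j 0 l) has_sum 0) B"
      by (rule has_sum_0) (use False in \<open>auto simp: q0\<close>)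
    then show ?thesis using False by (simp add: q1)
  qed
next
  case (Suc n)
  show ?case
  proof (cases "l \<in> B")
    case False
    have "((\<lambda>j. P i j * q B j (Suc n) l) has_sum 0) B"
      by (rule has_sum_0) (use False in \<open>auto simp: q_notB\<close>)
    then show ?thesis using False by (simp add: q_notB)
  next
    case True
    have inner: "((\<lambda>j. P i j * q B j n m * P m l) has_sum q B i (Suc n) m * P m l) B" for m
      using has_sum_cmult_left[OF Suc.IH[of m], of "P m l"] by (simp add: mult.assoc)
    have outer: "((\<lambda>m. q B i (Suc n) m * P m l) has_sum q B i (Suc (Suc n)) l) UNIV"
      by (rule QS[OF True])
    have "((\<lambda>j. \<Sum>\<^sub>\<infinity>m\<in>UNIV. P i j * q B j n m * P m l) has_sum q B i (Suc (Suc n)) l) B"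
      by (rule tonelli(2)[OF _ inner outer]) (auto intro!: mult_nonneg_nonneg Pnn q_nn)
    moreover have "(\<Sum>\<^sub>\<infinity>m\<in>UNIV. P i j * q B j n m * P m l) = P i j * q B j (Suc n) l" for j
    proof -
      have "(\<Sum>\<^sub>\<infinity>m\<in>UNIV. P i j * q B j n m * P m l) = P i j * (\<Sum>\<^sub>\<infinity>m. q B j n m * P m l)"
        by (simp add: mult.assoc infsum_cmult_right')
      also have "\<dots> = P i j * q B j (Suc n) l" using QS[OF True, of j n] by (simp add: infsumI)
      finally show ?thesis .
    qed
    ultimately show ?thesis by simp
  qed
qed

end

locale mc2 = mc P M X for P :: "'a::countable \<Rightarrow> 'a \<Rightarrow> real" and M :: "'a \<Rightarrow> 'w measure" and X +
  fixes A B :: "'a set" and \<pi> :: "'a \<Rightarrow> real"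
  assumes AB: "A \<inter> B = {}" "A \<union> B = UNIV" "A \<noteq> {}"
    and inv: "invariant_distribution P \<pi>" and irred: "irreducible_matrix P"
begin

lemma pi_nn: "0 \<le> \<pi> j" using inv by (simp add: invariant_distribution_def)
lemma pi_sum: "(\<pi> has_sum 1) UNIV" using inv by (simp add: invariant_distribution_def)
lemma pi_inv: "(\<Sum>\<^sub>\<infinity>i. \<pi> i * P i j) = \<pi> j" using inv by (simp add: invariant_distribution_def)
lemma notA: "j \<notin> A \<longleftrightarrow> j \<in> B" using AB by blast

lemma piP: "((\<lambda>i. \<pi> i * P i k) has_sum \<pi> k) UNIV"
proof -
  have inner: "((\<lambda>k. \<pi> i * P i k) has_sum \<pi> i) UNIV" for i
    using has_sum_cmult_right[OF Prow[of i], of "\<pi> i"] by simp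
  have "(\<lambda>i. \<pi> i * P i k) summable_on UNIV"
    by (rule tonelli(1)[where A=UNIV and B=UNIV and F="\<lambda>i k. \<pi> i * P i k" and G=\<pi> and S=1, OF _ inner pi_sum])
       (auto intro: mult_nonneg_nonneg pi_nn Pnn)
  then show ?thesis using pi_inv[of k] by (metis has_sum_infsum)
qed

lemma mpow_nn: "0 \<le> mpow Q n a b" if "\<And>x y. 0 \<le> Q x y" for Q
  using that by (induction n arbitrary: b) (auto intro!: infsum_nonneg mult_nonneg_nonneg)

lemma mpow_step:
  assumes "mpow P (Suc n) a k > 0"
  shows "\<exists>j. mpow P n a j > 0 \<and> P j k > 0"
proof (rule ccontr)
  assume "\<not> ?thesis"
  then have "\<And>j. mpow P n a j * P j k = 0"
    using mpow_nn[of P n a, OF Pnn] Pnn by (metis less_eq_real_def mult_eq_0_iff)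
  then have "mpow P (Suc n) a k = 0" by (simp add: infsum_0)
  with assms show False by simp
qed

lemma pi_pos: "0 < \<pi> k"
proof -
  have "\<exists>m. 0 < \<pi> m"
  proof (rule ccontr)
    assume "\<not> (\<exists>m. 0 < \<pi> m)"
    then have "\<pi> m = 0" for m using pi_nn[of m] by (auto simp: less_le)
    then have "\<pi> = (\<lambda>_. 0)" by auto
    then have "(\<pi> has_sum 0) UNIV" by simp
    with pi_sum show False using has_sum_unique by fastforce
  qed
  then obtain m where m: "0 < \<pi> m" by blast
  have "\<forall>k. mpow P n m k > 0 \<longrightarrow> \<pi> k > 0" for n
  proof (induction n)
    case 0 then show ?case using m by auto
  next
    case (Suc n)
    show ?case
    proof (intro allI impI)
      fix k assume "mpow P (Suc n) m k > 0"
      then obtain j where j: "mpow P n m j > 0" "P j k > 0" using mpow_step by blast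
      with Suc have "\<pi> j > 0" by blast
      then have "0 < \<pi> j * P j k" using j by simp
      also have "\<dots> \<le> \<pi> k"
        by (rule has_sum_ge_term[OF piP]) (auto intro: mult_nonneg_nonneg pi_nn Pnn)
      finally show "\<pi> k > 0" .
    qed
  qed
  moreover obtain n where "mpow P n m k > 0" using irred by (auto simp: irreducible_matrix_def)
  ultimately show ?thesis by blast
qed

lemma KB:
  assumes k: "k \<in> A"
  shows "l \<in> B \<Longrightarrow> \<pi> k * (\<Sum>t<N. q B k (Suc t) l) \<le> \<pi> l"
proof (induction N arbitrary: l)
  case 0 then show ?case by (simp add: pi_nn)
next
  case (Suc N)
  note l' = Suc.prems
  define c where "c j = \<pi> k * (q B k 0 j + (\<Sum>t<N. q B k (Suc t) j))" for j
  have h1: "((\<lambda>j. q B k 0 j * P j l) has_sum q B k (Suc 0) l) UNIV" by (rule QS[OF l'])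
  have h2: "((\<lambda>j. \<Sum>t<N. q B k (Suc t) j * P j l) has_sum (\<Sum>t<N. q B k (Suc (Suc t)) l)) UNIV"
    by (rule has_sum_sum') (auto intro: QS[OF l'])
  have hc: "((\<lambda>j. c j * P j l) has_sum \<pi> k * (q B k (Suc 0) l + (\<Sum>t<N. q B k (Suc (Suc t)) l))) UNIV"
  proof -
    have "((\<lambda>j. \<pi> k * (q B k 0 j * P j l + (\<Sum>t<N. q B k (Suc t) j * P j l))) has_sum
           \<pi> k * (q B k (Suc 0) l + (\<Sum>t<N. q B k (Suc (Suc t)) l))) UNIV"
      by (rule has_sum_cmult_right, rule has_sum_add[OF h1 h2])
    then show ?thesis by (simp add: c_def algebra_simps sum_distrib_left sum_distrib_right)
  qed
  have cle: "c j \<le> \<pi> j" for j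
  proof (cases "j \<in> B")
    case True
    then have "j \<noteq> k" using k AB by blast
    then have "c j = \<pi> k * (\<Sum>t<N. q B k (Suc t) j)" by (simp add: c_def q0)
    also have "\<dots> \<le> \<pi> j" by (rule Suc.IH[OF True])
    finally show ?thesis .
  next
    case False
    then have "c j = \<pi> k * q B k 0 j" by (simp add: c_def q_notB)
    then show ?thesis by (auto simp: q0 pi_nn)
  qed
  have "\<pi> k * (q B k (Suc 0) l + (\<Sum>t<N. q B k (Suc (Suc t)) l)) \<le> \<pi> l"
    by (rule has_sum_mono[OF hc piP]) (simp add: cle Pnn mult_right_mono)
  then show ?case unfolding sum.lessThan_Suc_shift .
qed

lemma KB1: "k \<in> A \<Longrightarrow> \<pi> k * q B k (Suc t) l \<le> \<pi> l"
proof (cases "l \<in> B")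
  case True
  assume k: "k \<in> A"
  have "\<pi> k * q B k (Suc t) l \<le> \<pi> k * (\<Sum>s<Suc t. q B k (Suc s) l)"
    by (rule mult_left_mono) (auto intro!: member_le_sum q_nn pi_nn sum_nonneg)
  also have "\<dots> \<le> \<pi> l" by (rule KB[OF k True])
  finally show ?thesis .
qed (simp add: q_notB pi_nn)

end



context mc2 begin

lemma SAk:
  assumes k: "k \<in> A" and fnn: "\<And>l. 0 \<le> f l" and s: "(\<lambda>l. \<pi> l * f l) summable_on UNIV"
  shows "(\<lambda>l. f l * q B k n l) summable_on UNIV" "summable (\<lambda>t. \<Sum>\<^sub>\<infinity>l. f l * q B k t l)"
proof -
  have pk: "0 < \<pi> k" by (rule pi_pos)
  have s': "(\<lambda>l. \<pi> l * f l * (1 / \<pi> k)) summable_on UNIV" by (rule summable_on_cmult_left[OF s])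
  have le1: "f l * q B k (Suc t) l \<le> \<pi> l * f l * (1 / \<pi> k)" for t l
  proof -
    have "\<pi> k * q B k (Suc t) l \<le> \<pi> l" by (rule KB1[OF k])
    then have "q B k (Suc t) l \<le> \<pi> l / \<pi> k" using pk by (simp add: field_simps)
    then have "f l * q B k (Suc t) l \<le> f l * (\<pi> l / \<pi> k)" by (rule mult_left_mono) (simp add: fnn)
    then show ?thesis by (simp add: mult.commute)
  qed
  have sS: "(\<lambda>l. f l * q B k (Suc t) l) summable_on UNIV" for t
    apply (rule summable_on_comparison_test[OF s'])
     apply (rule le1)
    apply (simp add: fnn q_nn)
    done
  show "(\<lambda>l. f l * q B k n l) summable_on UNIV"
  proof (cases n)
    case 0
    have "((\<lambda>l. f l * q B k 0 l) has_sum f k * q B k 0 k) UNIV"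
      by (rule has_sum_single') (auto simp: q0)
    then show ?thesis using 0 by (auto simp: summable_on_def)
  qed (simp add: sS)
  have bnd: "(\<Sum>t<N. \<Sum>\<^sub>\<infinity>l. f l * q B k (Suc t) l) \<le> (\<Sum>\<^sub>\<infinity>l. \<pi> l * f l * (1 / \<pi> k))" for N
  proof -
    have "((\<lambda>l. \<Sum>t<N. f l * q B k (Suc t) l) has_sum (\<Sum>t<N. \<Sum>\<^sub>\<infinity>l. f l * q B k (Suc t) l)) UNIV"
      by (rule has_sum_sum') (auto intro: has_sum_infsum sS)
    moreover have "((\<lambda>l. \<pi> l * f l * (1 / \<pi> k)) has_sum (\<Sum>\<^sub>\<infinity>l. \<pi> l * f l * (1 / \<pi> k))) UNIV"
      using s' by (rule has_sum_infsum)
    moreover have "(\<Sum>t<N. f l * q B k (Suc t) l) \<le> \<pi> l * f l * (1 / \<pi> k)" for l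
    proof (cases "l \<in> B")
      case True
      have "\<pi> k * (\<Sum>t<N. q B k (Suc t) l) \<le> \<pi> l" by (rule KB[OF k True])
      then have "(\<Sum>t<N. q B k (Suc t) l) \<le> \<pi> l / \<pi> k" using pk by (simp add: field_simps)
      then have "f l * (\<Sum>t<N. q B k (Suc t) l) \<le> f l * (\<pi> l / \<pi> k)" by (rule mult_left_mono) (simp add: fnn)
      then show ?thesis by (simp add: sum_distrib_left mult.commute)
    next
      case False
      then show ?thesis by (simp add: q_notB pi_nn fnn)
    qed
    ultimately show ?thesis by (rule has_sum_mono)
  qed
  have "summable (\<lambda>t. \<Sum>\<^sub>\<infinity>l. f l * q B k (Suc t) l)"
    by (rule summableI_nonneg_bounded[OF _ bnd]) (auto intro!: infsum_nonneg simp: fnn q_nn)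
  then show "summable (\<lambda>t. \<Sum>\<^sub>\<infinity>l. f l * q B k t l)"
    using summable_Suc_iff[of "\<lambda>t. \<Sum>\<^sub>\<infinity>l. f l * q B k t l"] by blast
qed

lemma reach:
  assumes i: "i \<in> B"
  shows "\<exists>k\<in>A. \<exists>m. 0 < q B k (Suc m) i"
proof -
  obtain k0 where k0: "k0 \<in> A" using AB by blast
  have "\<forall>i\<in>B. mpow P n k0 i > 0 \<longrightarrow> (\<exists>k\<in>A. \<exists>m. 0 < q B k (Suc m) i)" for n
  proof (induction n)
    case 0 then show ?case using k0 AB by auto
  next
    case (Suc n)
    show ?case
    proof (intro ballI impI)
      fix i assume iB: "i \<in> B" and pos: "mpow P (Suc n) k0 i > 0"
      then obtain j where j: "mpow P n k0 j > 0" "P j i > 0" using mpow_step by blast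
      show "\<exists>k\<in>A. \<exists>m. 0 < q B k (Suc m) i"
      proof (cases "j \<in> A")
        case True
        then show ?thesis using j iB by (intro bexI[OF _ True] exI[of _ 0]) (simp add: q1)
      next
        case False
        then have "j \<in> B" using AB by blast
        with Suc j obtain k m where km: "k \<in> A" "0 < q B k (Suc m) j" by blast
        have "0 < q B k (Suc m) j * P j i" using km j by simp
        also have "\<dots> \<le> q B k (Suc (Suc m)) i"
          by (rule has_sum_ge_term[OF QS[OF iB]]) (auto intro: mult_nonneg_nonneg q_nn Pnn)
        finally show ?thesis using km by blast
      qed
    qed
  qed
  moreover obtain n where "mpow P n k0 i > 0" using irred by (auto simp: irreducible_matrix_def)
  ultimately show ?thesis using i by blast
qed

lemma CK: "q B k m i * q B i t l \<le> q B k (m + t) l"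
proof (induction t arbitrary: l)
  case 0
  then show ?case by (auto simp: q0 q_nn q_le1)
next
  case (Suc t)
  show ?case
  proof (cases "l \<in> B")
    case False
    then show ?thesis by (simp add: q_notB q_nn)
  next
    case True
    have h1: "((\<lambda>j. q B k m i * (q B i t j * P j l)) has_sum q B k m i * q B i (Suc t) l) UNIV"
      by (rule has_sum_cmult_right, rule QS[OF True])
    have h2: "((\<lambda>j. q B k (m + t) j * P j l) has_sum q B k (Suc (m + t)) l) UNIV"
      by (rule QS[OF True])
    have "q B k m i * q B i (Suc t) l \<le> q B k (Suc (m + t)) l"
    proof (rule has_sum_mono[OF h1 h2])
      fix j
      have "q B k m i * q B i t j * P j l \<le> q B k (m + t) j * P j l"
        by (rule mult_right_mono[OF Suc.IH Pnn])
      then show "q B k m i * (q B i t j * P j l) \<le> q B k (m + t) j * P j l" by (simp add: mult.assoc)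
    qed
    then show ?thesis by simp
  qed
qed

lemma SUMM:
  assumes fnn: "\<And>l. 0 \<le> f l" and s: "(\<lambda>l. \<pi> l * f l) summable_on UNIV"
  shows "(\<lambda>l. f l * q B i n l) summable_on UNIV" "summable (\<lambda>t. \<Sum>\<^sub>\<infinity>l. f l * q B i t l)"
proof -
  have "((\<lambda>l. f l * q B i n l) summable_on UNIV) \<and> summable (\<lambda>t. \<Sum>\<^sub>\<infinity>l. f l * q B i t l)"
  proof (cases "i \<in> A")
    case True
    then show ?thesis using SAk[OF True fnn s] by blast
  next
    case False
    then have iB: "i \<in> B" using AB by blast
    obtain k m where k: "k \<in> A" and c: "0 < q B k (Suc m) i" using reach[OF iB] by blast
    define c where "c = q B k (Suc m) i"
    have cpos: "0 < c" using c by (simp add: c_def)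
    have le: "f l * q B i t l \<le> f l * q B k (Suc m + t) l * (1 / c)" for t l
    proof -
      have "c * q B i t l \<le> q B k (Suc m + t) l" unfolding c_def by (rule CK)
      then have "q B i t l \<le> q B k (Suc m + t) l / c" using cpos by (simp add: field_simps)
      then have "f l * q B i t l \<le> f l * (q B k (Suc m + t) l / c)" by (rule mult_left_mono) (simp add: fnn)
      then show ?thesis by simp
    qed
    have s1: "(\<lambda>l. f l * q B i t l) summable_on UNIV" for t
      apply (rule summable_on_comparison_test[OF summable_on_cmult_left[OF SAk(1)[OF k fnn s, of "Suc m + t"]]])
       apply (rule le)
      apply (simp add: fnn q_nn)
      done
    have s2: "summable (\<lambda>t. (\<Sum>\<^sub>\<infinity>l. f l * q B k (Suc m + t) l) * (1 / c))"
    proof -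
      have "summable (\<lambda>t. \<Sum>\<^sub>\<infinity>l. f l * q B k (t + Suc m) l)"
        using SAk(2)[OF k fnn s] by (subst summable_iff_shift) 
      then show ?thesis by (intro summable_mult2) (simp add: add.commute)
    qed
    have "summable (\<lambda>t. \<Sum>\<^sub>\<infinity>l. f l * q B i t l)"
    proof (rule summable_comparison_test'[OF s2])
      fix t
      have "(\<Sum>\<^sub>\<infinity>l. f l * q B i t l) \<le> (\<Sum>\<^sub>\<infinity>l. f l * q B k (Suc m + t) l * (1 / c))"
        by (rule infsum_mono[OF s1 summable_on_cmult_left[OF SAk(1)[OF k fnn s, of "Suc m + t"]]], rule le)
      also have "\<dots> = (\<Sum>\<^sub>\<infinity>l. f l * q B k (Suc m + t) l) * (1 / c)"
        by (rule infsum_cmult_left') 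
      finally show "norm (\<Sum>\<^sub>\<infinity>l. f l * q B i t l) \<le> (\<Sum>\<^sub>\<infinity>l. f l * q B k (Suc m + t) l) * (1 / c)"
        using infsum_nonneg[of UNIV "\<lambda>l. f l * q B i t l"] fnn q_nn by (simp add: mult_nonneg_nonneg)
    qed
    with s1 show ?thesis by blast
  qed
  then show "(\<lambda>l. f l * q B i n l) summable_on UNIV" "summable (\<lambda>t. \<Sum>\<^sub>\<infinity>l. f l * q B i t l)" by auto
qed

end



lemma option_has_sum:
  fixes F :: "'b option \<Rightarrow> real"
  assumes "F None = 0"
  shows "(F has_sum S) UNIV \<longleftrightarrow> ((\<lambda>l. F (Some l)) has_sum S) UNIV"
proof -
  have "(F has_sum S) UNIV \<longleftrightarrow> (F has_sum S) (range Some)"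
    by (rule has_sum_cong_neutral) (use assms in \<open>auto simp: notin_range_Some\<close>)
  also have "\<dots> \<longleftrightarrow> ((F \<circ> Some) has_sum S) UNIV"
    by (rule has_sum_reindex) simp
  finally show ?thesis by (simp add: o_def)
qed

context mc2 begin

lemma C_meas: "((\<lambda>l. q B i n l) has_sum measure (M i) {\<omega>\<in>space (M i). \<forall>t\<in>{1..n}. X t \<omega> \<in> B}) UNIV"
  by (rule q_tot)

lemma hit_AE: "AE \<omega> in M i. \<exists>t\<ge>1. X t \<omega> \<in> A"
proof -
  let ?N = "{\<omega>\<in>space (M i). \<not> (\<exists>t\<ge>1. X t \<omega> \<in> A)}"
  have Nm: "?N \<in> sets (M i)" by measurable
  have s1: "(\<lambda>l. \<pi> l * 1) summable_on UNIV" using pi_sum by (auto simp: summable_on_def)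
  have sm: "summable (\<lambda>t. \<Sum>\<^sub>\<infinity>l. q B i t l)" using SUMM(2)[OF _ s1] by simp
  have eqm: "(\<lambda>t. \<Sum>\<^sub>\<infinity>l. q B i t l) = (\<lambda>t. measure (M i) {\<omega>\<in>space (M i). \<forall>s\<in>{1..t}. X s \<omega> \<in> B})"
    using C_meas[of i] by (intro ext) (simp add: infsumI)
  have lim: "(\<lambda>t. measure (M i) {\<omega>\<in>space (M i). \<forall>s\<in>{1..t}. X s \<omega> \<in> B}) \<longlonglongrightarrow> 0"
    using summable_LIMSEQ_zero[OF sm] unfolding eqm .
  have le: "measure (M i) ?N \<le> measure (M i) {\<omega>\<in>space (M i). \<forall>s\<in>{1..t}. X s \<omega> \<in> B}" for t
  proof (rule finite_measure.finite_measure_mono[OF fm])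
    show "?N \<subseteq> {\<omega>\<in>space (M i). \<forall>s\<in>{1..t}. X s \<omega> \<in> B}" using notA by auto
    show "{\<omega>\<in>space (M i). \<forall>s\<in>{1..t}. X s \<omega> \<in> B} \<in> sets (M i)" by measurable
  qed
  have "measure (M i) ?N \<le> 0" by (rule LIMSEQ_le_const[OF lim]) (use le in auto)
  then have "measure (M i) ?N = 0" by (simp add: measure_le_0_iff)
  then have "emeasure (M i) ?N = 0" using fm by (simp add: finite_measure.emeasure_eq_measure)
  then show ?thesis using AE_iff_measurable[OF Nm] by auto
qed

lemma YV:
  assumes gs: "(\<lambda>l. \<pi> l * \<bar>g l\<bar>) summable_on UNIV"
  shows "summable (\<lambda>t. \<Sum>\<^sub>\<infinity>l. \<bar>g l\<bar> * q B i t l)"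
    "\<And>t. (\<lambda>l. \<bar>g l\<bar> * q B i t l) summable_on UNIV"
    "y_vec M X g A i = (\<Sum>t. \<Sum>\<^sub>\<infinity>l. g l * q B i t l)"
proof -
  show sm: "summable (\<lambda>t. \<Sum>\<^sub>\<infinity>l. \<bar>g l\<bar> * q B i t l)" by (rule SUMM(2)[OF _ gs]) simp
  show sl: "\<And>t. (\<lambda>l. \<bar>g l\<bar> * q B i t l) summable_on UNIV" by (rule SUMM(1)[OF _ gs]) simp
  define Y where "Y t \<omega> = (if \<forall>s\<in>{1..t}. X s \<omega> \<in> B then Some (X t \<omega>) else None)" for t \<omega>
  define \<phi> where "\<phi> = case_option 0 g"
  define F where "F = (\<lambda>t \<omega>. \<phi> (Y t \<omega>))"
  have Ym[measurable]: "Y t \<in> measurable (M i) (count_space UNIV)" for t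
    unfolding Y_def by measurable
  have mY: "measure (M i) {\<omega>\<in>space (M i). Y t \<omega> = Some l} = q B i t l" for t l
    unfolding q_def Y_def by (rule arg_cong[where f="measure (M i)"]) auto
  have sY: "(\<lambda>y. \<bar>\<phi> y\<bar> * measure (M i) {\<omega>\<in>space (M i). Y t \<omega> = y}) summable_on UNIV" for t
  proof -
    have "((\<lambda>l. \<bar>g l\<bar> * q B i t l) has_sum (\<Sum>\<^sub>\<infinity>l. \<bar>g l\<bar> * q B i t l)) UNIV" using sl by (rule has_sum_infsum)
    then have "((\<lambda>y. \<bar>\<phi> y\<bar> * measure (M i) {\<omega>\<in>space (M i). Y t \<omega> = y}) has_sum (\<Sum>\<^sub>\<infinity>l. \<bar>g l\<bar> * q B i t l)) UNIV"
      by (subst option_has_sum) (auto simp: \<phi>_def mY)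
    then show ?thesis by (auto simp: summable_on_def)
  qed
  have sY': "(\<lambda>y. \<bar>\<bar>\<phi> y\<bar>\<bar> * measure (M i) {\<omega>\<in>space (M i). Y t \<omega> = y}) summable_on UNIV" for t
    using sY[of t] by simp
  note E1 = EXP[OF fm Ym sY] and E2 = EXP[OF fm Ym sY']
  have intF: "integrable (M i) (F t)" for t using E1(1)[of t] by (simp add: F_def)
  have valF: "integral\<^sup>L (M i) (F t) = (\<Sum>\<^sub>\<infinity>l. g l * q B i t l)" for t
  proof -
    have "((\<lambda>y. \<phi> y * measure (M i) {\<omega>\<in>space (M i). Y t \<omega> = y}) has_sum integral\<^sup>L (M i) (F t)) UNIV"
      using E1(2)[of t] by (simp add: F_def)
    then have "((\<lambda>l. g l * q B i t l) has_sum integral\<^sup>L (M i) (F t)) UNIV"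
      by (subst (asm) option_has_sum) (auto simp: \<phi>_def mY)
    then show ?thesis by (simp add: infsumI)
  qed
  have valaF: "(\<integral>\<omega>. norm (F t \<omega>) \<partial>M i) = (\<Sum>\<^sub>\<infinity>l. \<bar>g l\<bar> * q B i t l)" for t
  proof -
    have "((\<lambda>y. \<bar>\<phi> y\<bar> * measure (M i) {\<omega>\<in>space (M i). Y t \<omega> = y}) has_sum (\<integral>\<omega>. norm (F t \<omega>) \<partial>M i)) UNIV"
      using E2(2)[of t] by (simp add: F_def)
    then have "((\<lambda>l. \<bar>g l\<bar> * q B i t l) has_sum (\<integral>\<omega>. norm (F t \<omega>) \<partial>M i)) UNIV"
      by (subst (asm) option_has_sum) (auto simp: \<phi>_def mY)
    then show ?thesis by (simp add: infsumI)
  qed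
  have Fv: "F t \<omega> = (if \<forall>s\<in>{1..t}. X s \<omega> \<in> B then g (X t \<omega>) else 0)" for t \<omega>
    by (simp add: F_def Y_def \<phi>_def)
  have fin: "F t \<omega> = 0" if "t \<ge> hit_time A X \<omega>" "\<exists>t\<ge>1. X t \<omega> \<in> A" for t \<omega>
  proof -
    have "1 \<le> hit_time A X \<omega> \<and> X (hit_time A X \<omega>) \<omega> \<in> A"
      unfolding hit_time_def using that(2) by (rule LeastI_ex)
    then have "\<not> (\<forall>s\<in>{1..t}. X s \<omega> \<in> B)" using that(1) notA by force
    then show ?thesis unfolding Fv by (simp only: if_False)
  qed
  have notfin: "F t \<omega> = g (X t \<omega>)" if "t < hit_time A X \<omega>" for t \<omega>
  proof -
    have "X s \<omega> \<in> B" if "s \<in> {1..t}" for s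
    proof (rule ccontr)
      assume "X s \<omega> \<notin> B"
      then have "1 \<le> s \<and> X s \<omega> \<in> A" using that notA by auto
      then have "hit_time A X \<omega> \<le> s" unfolding hit_time_def by (rule Least_le)
      with \<open>t < hit_time A X \<omega>\<close> that show False by auto
    qed
    then show ?thesis by (simp add: Fv)
  qed
  have ae: "AE \<omega> in M i. (\<Sum>t<hit_time A X \<omega>. g (X t \<omega>)) = (\<Sum>t. F t \<omega>) \<and> summable (\<lambda>t. norm (F t \<omega>))"
    using hit_AE
  proof eventually_elim
    case (elim \<omega>)
    have z: "\<And>t. t \<notin> {..<hit_time A X \<omega>} \<Longrightarrow> F t \<omega> = 0" using fin elim by auto
    have "(\<Sum>t. F t \<omega>) = (\<Sum>t<hit_time A X \<omega>. F t \<omega>)" by (rule suminf_finite) (use z in auto)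
    also have "\<dots> = (\<Sum>t<hit_time A X \<omega>. g (X t \<omega>))" by (rule sum.cong) (auto simp: notfin)
    finally have 1: "(\<Sum>t<hit_time A X \<omega>. g (X t \<omega>)) = (\<Sum>t. F t \<omega>)" ..
    have "summable (\<lambda>t. norm (F t \<omega>))"
      by (rule summable_finite[of "{..<hit_time A X \<omega>}"]) (use z in auto)
    with 1 show ?case by blast
  qed
  have "(\<lambda>t. \<integral>\<omega>. norm (F t \<omega>) \<partial>M i) = (\<lambda>t. \<Sum>\<^sub>\<infinity>l. \<bar>g l\<bar> * q B i t l)"
    by (rule ext) (rule valaF)
  then have sI: "summable (\<lambda>t. \<integral>\<omega>. norm (F t \<omega>) \<partial>M i)" using sm by (simp only:)
  have ht[measurable]: "hit_time A X \<in> measurable (M i) (count_space UNIV)"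
    unfolding hit_time_def by measurable
  have m1: "(\<lambda>\<omega>. \<Sum>t<hit_time A X \<omega>. g (X t \<omega>)) \<in> borel_measurable (M i)"
    by (rule measurable_compose_countable[where f="\<lambda>n \<omega>. \<Sum>t<n. g (X t \<omega>)" and g="hit_time A X"]) measurable
  have aeS: "AE \<omega> in M i. summable (\<lambda>t. norm (F t \<omega>))" using ae by auto
  have intS: "integrable (M i) (\<lambda>\<omega>. \<Sum>t. F t \<omega>)" by (rule integrable_suminf[OF intF aeS sI])
  have "y_vec M X g A i = (\<integral>\<omega>. (\<Sum>t. F t \<omega>) \<partial>M i)"
    unfolding y_vec_def by (rule integral_cong_AE[OF m1]) (use intS ae in auto)
  also have "\<dots> = (\<Sum>t. integral\<^sup>L (M i) (F t))" by (rule integral_suminf[OF intF aeS sI])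
  finally show "y_vec M X g A i = (\<Sum>t. \<Sum>\<^sub>\<infinity>l. g l * q B i t l)" by (simp add: valF)
qed

end



context mc begin
definition NN :: "'a set \<Rightarrow> 'a \<Rightarrow> 'a \<Rightarrow> real" where "NN B i l = (\<Sum>n. q B i n l)"

lemma MQ: "j \<in> B \<Longrightarrow> mpow (restr P B) n j l = q B j n l"
proof (induction n arbitrary: l)
  case 0 then show ?case by (simp add: q0)
next
  case (Suc n)
  show ?case
  proof (cases "l \<in> B")
    case False
    then show ?thesis by (simp add: restr_def q_notB)
  next
    case True
    have "mpow (restr P B) (Suc n) j l = (\<Sum>\<^sub>\<infinity>m. q B j n m * restr P B m l)"
      using Suc by simp
    also have "\<dots> = (\<Sum>\<^sub>\<infinity>m. q B j n m * P m l)"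
    proof (rule infsum_cong)
      fix m
      show "q B j n m * restr P B m l = q B j n m * P m l"
      proof (cases "m \<in> B")
        case False
        then have "q B j n m = 0" using Suc.prems by (intro q_out) auto
        then show ?thesis by simp
      qed (simp add: restr_def True)
    qed
    also have "\<dots> = q B j (Suc n) l" using QS[OF True] by (simp add: infsumI)
    finally show ?thesis .
  qed
qed

lemma NB_eq: "j \<in> B \<Longrightarrow> NB P B j l = NN B j l"
  by (simp add: NB_def NN_def MQ)

lemma NN_nn: "0 \<le> NN B i l" if "summable (\<lambda>n. q B i n l)"
  unfolding NN_def using that by (simp add: suminf_nonneg q_nn)
end

context mc2 begin

lemma N0: "summable (\<lambda>n. q B i n l)"
proof -
  define f where "f m = (if m = l then 1 else (0::real))" for m
  have "((\<lambda>m. \<pi> m * f m) has_sum (\<pi> l * f l)) UNIV" by (rule has_sum_single') (auto simp: f_def)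
  then have s: "(\<lambda>m. \<pi> m * f m) summable_on UNIV" by (auto simp: summable_on_def)
  have "summable (\<lambda>t. \<Sum>\<^sub>\<infinity>m. f m * q B i t m)" by (rule SUMM(2)[OF _ s]) (simp add: f_def)
  moreover have "(\<Sum>\<^sub>\<infinity>m. f m * q B i t m) = q B i t l" for t
  proof -
    have "((\<lambda>m. f m * q B i t m) has_sum (f l * q B i t l)) UNIV" by (rule has_sum_single') (auto simp: f_def)
    then show ?thesis by (simp add: infsumI f_def)
  qed
  ultimately show ?thesis by simp
qed

lemma NNnn: "0 \<le> NN B i l" by (rule NN_nn[OF N0])

lemma NN_hs: "((\<lambda>n. q B i n l) has_sum NN B i l) UNIV"
  unfolding NN_def by (rule nat_nn_infsum[OF N0]) (simp add: q_nn)

lemma N_sum: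
  assumes fs: "(\<lambda>l. \<pi> l * \<bar>f l\<bar>) summable_on UNIV"
  shows "((\<lambda>l. f l * NN B i l) has_sum (\<Sum>t. \<Sum>\<^sub>\<infinity>l. f l * q B i t l)) UNIV"
proof -
  define F where "F = (\<lambda>t l. f l * q B i t l)"
  have aF: "\<bar>F t l\<bar> = \<bar>f l\<bar> * q B i t l" for t l by (simp add: F_def abs_mult q_nn)
  have si: "(\<lambda>l. \<bar>F t l\<bar>) summable_on UNIV" for t unfolding aF by (rule SUMM(1)[OF _ fs]) simp
  have ss: "summable (\<lambda>t. \<Sum>\<^sub>\<infinity>l. \<bar>F t l\<bar>)" unfolding aF by (rule SUMM(2)[OF _ fs]) simp
  have so: "(\<lambda>t. \<Sum>\<^sub>\<infinity>l. \<bar>F t l\<bar>) summable_on UNIV"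
    by (rule summable_nonneg_imp_summable_on[OF ss]) (simp add: infsum_nonneg)
  have hs: "((\<lambda>l. \<Sum>\<^sub>\<infinity>t. F t l) has_sum (\<Sum>\<^sub>\<infinity>t. \<Sum>\<^sub>\<infinity>l. F t l)) UNIV"
    by (rule fub_hs[where A=UNIV and B=UNIV, OF si so])
  have e1: "(\<Sum>\<^sub>\<infinity>t. F t l) = f l * NN B i l" for l
    unfolding F_def by (simp add: infsum_cmult_right' infsumI[OF NN_hs])
  have "summable (\<lambda>t. \<bar>\<Sum>\<^sub>\<infinity>l. F t l\<bar>)"
  proof (rule summable_comparison_test'[OF ss])
    fix t
    have "norm (\<Sum>\<^sub>\<infinity>l. F t l) \<le> (\<Sum>\<^sub>\<infinity>l. norm (F t l))"
      by (rule norm_infsum_bound) (use si[of t] in simp)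
    then show "norm \<bar>\<Sum>\<^sub>\<infinity>l. F t l\<bar> \<le> (\<Sum>\<^sub>\<infinity>l. \<bar>F t l\<bar>)" by simp
  qed
  then have e2: "(\<Sum>\<^sub>\<infinity>t. \<Sum>\<^sub>\<infinity>l. F t l) = (\<Sum>t. \<Sum>\<^sub>\<infinity>l. F t l)" by (simp add: nat_abs_infsum(3))
  from hs show ?thesis unfolding e1 e2 by (simp add: F_def)
qed

lemma N_sum':
  assumes fs: "(\<lambda>l. \<pi> l * \<bar>f l\<bar>) summable_on UNIV"
  shows "(\<lambda>l. \<bar>f l\<bar> * NN B i l) summable_on UNIV"
  using N_sum[of "\<lambda>l. \<bar>f l\<bar>"] fs by (auto simp: summable_on_def)

lemma N_FS: "((\<lambda>j. P i j * NN B j l) has_sum NN B i l - (if l = i then 1 else 0)) B"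
proof -
  have inner: "((\<lambda>j. P i j * q B j n l) has_sum q B i (Suc n) l) B" for n by (rule FS)
  have sS: "summable (\<lambda>n. q B i (Suc n) l)" using N0[of i l] summable_Suc_iff[of "\<lambda>n. q B i n l"] by blast
  have outer: "((\<lambda>n. q B i (Suc n) l) has_sum (\<Sum>n. q B i (Suc n) l)) UNIV"
    by (rule nat_nn_infsum[OF sS]) (simp add: q_nn)
  have "((\<lambda>j. \<Sum>\<^sub>\<infinity>n\<in>UNIV. P i j * q B j n l) has_sum (\<Sum>n. q B i (Suc n) l)) B"
    by (rule tonelli(2)[OF _ inner outer]) (auto intro: mult_nonneg_nonneg Pnn q_nn)
  moreover have "(\<Sum>\<^sub>\<infinity>n\<in>UNIV. P i j * q B j n l) = P i j * NN B j l" for j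
    by (simp add: infsum_cmult_right' infsumI[OF NN_hs])
  moreover have "(\<Sum>n. q B i (Suc n) l) = NN B i l - (if l = i then 1 else 0)"
    unfolding NN_def by (simp add: suminf_split_head[OF N0] q0)
  ultimately show ?thesis by simp
qed

lemma N_PA: assumes k: "k \<notin> B" shows "(\<lambda>l. NN B i l * P l k) summable_on B"
proof -
  let ?E = "\<lambda>n. {\<omega>\<in>space (M i). (\<forall>t\<in>{1..n}. X t \<omega> \<in> B) \<and> X n \<omega> \<in> B \<and> X (Suc n) \<omega> = k}"
  have inner: "((\<lambda>l. q B i n l * P l k) has_sum measure (M i) (?E n)) B" for n by (rule QSg)
  have dj: "disjoint_family_on ?E UNIV"
  proof (unfold disjoint_family_on_def, intro ballI impI)
    fix n m :: nat assume "n \<noteq> m"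
    show "?E n \<inter> ?E m = {}"
    proof (cases "n < m")
      case True
      then show ?thesis using k by (auto dest!: bspec[where x="Suc n"])
    next
      case False
      then have "m < n" using \<open>n \<noteq> m\<close> by simp
      then show ?thesis using k by (auto dest!: bspec[where x="Suc m"])
    qed
  qed
  have outer: "((\<lambda>n. measure (M i) (?E n)) has_sum measure (M i) (\<Union>n\<in>UNIV. ?E n)) UNIV"
    by (rule CA[OF fm _ _ dj]) auto
  have "((\<lambda>l. \<Sum>\<^sub>\<infinity>n\<in>UNIV. q B i n l * P l k) has_sum measure (M i) (\<Union>n\<in>UNIV. ?E n)) B"
    by (rule tonelli(2)[OF _ inner outer]) (auto intro: mult_nonneg_nonneg Pnn q_nn)
  moreover have "(\<Sum>\<^sub>\<infinity>n\<in>UNIV. q B i n l * P l k) = NN B i l * P l k" for l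
    by (simp add: infsum_cmult_left' infsumI[OF NN_hs])
  ultimately show ?thesis by (auto simp: summable_on_def)
qed

end



context mc2 begin

definition W :: "'a \<Rightarrow> 'a \<Rightarrow> real" where "W i k = (\<Sum>\<^sub>\<infinity>l\<in>B. NN B i l * P l k)"

lemma W_hs: "k \<in> A \<Longrightarrow> ((\<lambda>l. NN B i l * P l k) has_sum W i k) B"
  unfolding W_def using N_PA[of k i] notA by (auto intro: has_sum_infsum)

lemma W_nn: "0 \<le> W i k"
  unfolding W_def by (rule infsum_nonneg) (auto intro: mult_nonneg_nonneg NNnn Pnn)

lemma NBPBA_eq: "j \<in> B \<Longrightarrow> NBPBA P A B j k = W j k"
  unfolding NBPBA_def W_def by (rule infsum_cong) (simp add: NB_eq)

lemma NN_ii: "1 \<le> NN B i i"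
proof -
  have "q B i 0 i \<le> NN B i i" by (rule has_sum_ge_term[OF NN_hs]) (auto simp: q_nn)
  then show ?thesis by (simp add: q0)
qed

lemma W_ge: "i \<in> B \<Longrightarrow> k \<in> A \<Longrightarrow> P i k \<le> W i k"
proof -
  assume i: "i \<in> B" and k: "k \<in> A"
  have "NN B i i * P i k \<le> W i k"
    by (rule has_sum_ge_term[OF W_hs[OF k] i]) (auto intro: mult_nonneg_nonneg NNnn Pnn)
  moreover have "1 * P i k \<le> NN B i i * P i k" by (rule mult_right_mono[OF NN_ii Pnn])
  ultimately show ?thesis by simp
qed

lemma delta_hs: "((\<lambda>l. (if l = i then 1 else 0) * F l) has_sum (if i \<in> B then F i else (0::real))) B"
proof (cases "i \<in> B")
  case True
  show ?thesis using has_sum_single'[OF True, of "\<lambda>l. (if l = i then 1 else 0) * F l"] True by simp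
next
  case False
  have "((\<lambda>l. (if l = i then 1 else 0) * F l) has_sum 0) B" by (rule has_sum_0) (use False in auto)
  then show ?thesis using False by simp
qed

lemma K1: assumes k: "k \<in> A"
  shows "((\<lambda>j. P i j * W j k) has_sum W i k - (if i \<in> B then P i k else 0)) B"
proof -
  have inner: "((\<lambda>j. P i j * NN B j l * P l k) has_sum (NN B i l - (if l = i then 1 else 0)) * P l k) B" for l
    using has_sum_cmult_left[OF N_FS[of i l], of "P l k"] by simp
  have outer: "((\<lambda>l. (NN B i l - (if l = i then 1 else 0)) * P l k) has_sum W i k - (if i \<in> B then P i k else 0)) B"
    using has_sum_diff'[OF W_hs[OF k] delta_hs[of i "\<lambda>l. P l k"]] by (simp add: left_diff_distrib)
  have "((\<lambda>j. \<Sum>\<^sub>\<infinity>l\<in>B. P i j * NN B j l * P l k) has_sum W i k - (if i \<in> B then P i k else 0)) B"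
    by (rule tonelli(2)[OF _ inner outer]) (auto intro!: mult_nonneg_nonneg Pnn NNnn)
  moreover have "(\<Sum>\<^sub>\<infinity>l\<in>B. P i j * NN B j l * P l k) = P i j * W j k" for j
    unfolding W_def by (simp add: mult.assoc infsum_cmult_right')
  ultimately show ?thesis by simp
qed

end



context mc2 begin

lemma tau_y: "tau_vec M X A i = y_vec M X (\<lambda>_. 1) A i"
  by (simp add: tau_vec_def y_vec_def)

lemma Yhs:
  assumes gint: "(\<lambda>l. \<pi> l * \<bar>g l\<bar>) summable_on UNIV"
  shows "((\<lambda>l. NN B i l * (g l - \<omega>)) has_sum (y_vec M X g A i - \<omega> * tau_vec M X A i)) UNIV"
proof -
  have h1: "((\<lambda>l. g l * NN B i l) has_sum y_vec M X g A i) UNIV"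
    using N_sum[OF gint, of i] YV(3)[OF gint, of i] by simp
  have s1: "(\<lambda>l. \<pi> l * \<bar>(\<lambda>_. 1::real) l\<bar>) summable_on UNIV" using pi_sum by (auto simp: summable_on_def)
  have h2: "((\<lambda>l. 1 * NN B i l) has_sum tau_vec M X A i) UNIV"
    using N_sum[OF s1, of i] YV(3)[OF s1, of i] by (simp add: tau_y)
  have "((\<lambda>l. g l * NN B i l - \<omega> * (1 * NN B i l)) has_sum (y_vec M X g A i - \<omega> * tau_vec M X A i)) UNIV"
    by (rule has_sum_diff'[OF h1 has_sum_cmult_right[OF h2]])
  then show ?thesis by (simp add: algebra_simps)
qed

lemma u_sum:
  assumes gint: "(\<lambda>l. \<pi> l * \<bar>g l\<bar>) summable_on UNIV"
  shows "(\<lambda>l. \<pi> l * \<bar>g l - \<omega>\<bar>) summable_on UNIV"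
proof -
  have s: "(\<lambda>l. \<pi> l * \<bar>g l\<bar> + \<bar>\<omega>\<bar> * \<pi> l) summable_on UNIV"
    by (rule summable_on_add[OF gint summable_on_cmult_right]) (use pi_sum in \<open>auto simp: summable_on_def\<close>)
  show ?thesis
  proof (rule summable_on_comparison_test[OF s])
    fix l
    have "\<pi> l * \<bar>g l - \<omega>\<bar> \<le> \<pi> l * (\<bar>g l\<bar> + \<bar>\<omega>\<bar>)" by (rule mult_left_mono) (auto simp: pi_nn)
    then show "\<pi> l * \<bar>g l - \<omega>\<bar> \<le> \<pi> l * \<bar>g l\<bar> + \<bar>\<omega>\<bar> * \<pi> l" by (simp add: algebra_simps)
    show "0 \<le> \<pi> l * \<bar>g l - \<omega>\<bar>" by (simp add: pi_nn)
  qed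
qed

lemma K2:
  fixes g :: "'a \<Rightarrow> real" and \<omega> :: real
  assumes gint: "(\<lambda>l. \<pi> l * \<bar>g l\<bar>) summable_on UNIV"
  defines "Y \<equiv> \<lambda>j. y_vec M X g A j - \<omega> * tau_vec M X A j"
  shows "((\<lambda>j. P i j * Y j) has_sum Y i - (g i - \<omega>)) B" "(\<lambda>j. P i j * \<bar>Y j\<bar>) summable_on B"
proof -
  define u where "u l = g l - \<omega>" for l
  have Yh: "((\<lambda>l. NN B j l * u l) has_sum Y j) UNIV" for j
    unfolding u_def Y_def by (rule Yhs[OF gint])
  have Ya: "(\<lambda>l. NN B j l * \<bar>u l\<bar>) summable_on UNIV" for j
    using N_sum'[OF u_sum[OF gint, of \<omega>], of j] by (simp add: u_def mult.commute)
  define F where "F = (\<lambda>j l. P i j * NN B j l * u l)"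
  have aF: "\<bar>F j l\<bar> = P i j * (NN B j l * \<bar>u l\<bar>)" for j l
    by (simp add: F_def abs_mult Pnn NNnn)
  have i_: "(\<lambda>l. \<bar>F j l\<bar>) summable_on UNIV" if "j \<in> B" for j
    unfolding aF by (rule summable_on_cmult_right[OF Ya])
  have inner: "((\<lambda>j. P i j * NN B j l * \<bar>u l\<bar>) has_sum (NN B i l - (if l = i then 1 else 0)) * \<bar>u l\<bar>) B" for l
    using has_sum_cmult_left[OF N_FS[of i l], of "\<bar>u l\<bar>"] by simp
  have sing: "((\<lambda>l. (if l = i then 1 else 0) * G l) has_sum G i) UNIV" for G :: "'a \<Rightarrow> real"
    using has_sum_single'[of i UNIV "\<lambda>l. (if l = i then 1 else 0) * G l"] by simp
  have outer: "((\<lambda>l. (NN B i l - (if l = i then 1 else 0)) * \<bar>u l\<bar>) has_sum (\<Sum>\<^sub>\<infinity>l. NN B i l * \<bar>u l\<bar>) - \<bar>u i\<bar>) UNIV"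
    using has_sum_diff'[OF has_sum_infsum[OF Ya] sing[of "\<lambda>l. \<bar>u l\<bar>"]] by (simp add: left_diff_distrib)
  have T: "((\<lambda>j. \<Sum>\<^sub>\<infinity>l. P i j * NN B j l * \<bar>u l\<bar>) has_sum (\<Sum>\<^sub>\<infinity>l. NN B i l * \<bar>u l\<bar>) - \<bar>u i\<bar>) B"
    by (rule tonelli(2)[OF _ inner outer]) (auto intro!: mult_nonneg_nonneg Pnn NNnn)
  have o_: "(\<lambda>j. \<Sum>\<^sub>\<infinity>l. \<bar>F j l\<bar>) summable_on B"
    using T by (auto simp: summable_on_def aF mult.assoc)
  have hs: "((\<lambda>l. \<Sum>\<^sub>\<infinity>j\<in>B. F j l) has_sum (\<Sum>\<^sub>\<infinity>j\<in>B. \<Sum>\<^sub>\<infinity>l. F j l)) UNIV"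
    by (rule fub_hs[where A=B and B=UNIV, OF i_ o_])
  have e1: "(\<Sum>\<^sub>\<infinity>j\<in>B. F j l) = (NN B i l - (if l = i then 1 else 0)) * u l" for l
    unfolding F_def by (simp add: infsum_cmult_left' infsumI[OF N_FS])
  have h2: "((\<lambda>l. (NN B i l - (if l = i then 1 else 0)) * u l) has_sum Y i - u i) UNIV"
    using has_sum_diff'[OF Yh sing[of u]] by (simp add: left_diff_distrib)
  have v: "(\<Sum>\<^sub>\<infinity>j\<in>B. \<Sum>\<^sub>\<infinity>l. F j l) = Y i - u i"
    using hs unfolding e1 using h2 has_sum_unique by blast
  have e2: "(\<Sum>\<^sub>\<infinity>l. F j l) = P i j * Y j" for j
    unfolding F_def by (simp add: mult.assoc infsum_cmult_right' infsumI[OF Yh])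
  have "(\<lambda>j. \<Sum>\<^sub>\<infinity>l. F j l) summable_on B" by (rule fub_o[where A=B and B=UNIV, OF i_ o_])
  then have "((\<lambda>j. \<Sum>\<^sub>\<infinity>l. F j l) has_sum Y i - u i) B" using v by (metis has_sum_infsum)
  then show "((\<lambda>j. P i j * Y j) has_sum Y i - (g i - \<omega>)) B" by (simp add: e2 u_def)
  show "(\<lambda>j. P i j * \<bar>Y j\<bar>) summable_on B"
  proof (rule summable_on_comparison_test[OF o_])
    fix j
    have "\<bar>Y j\<bar> \<le> (\<Sum>\<^sub>\<infinity>l. norm (NN B j l * u l))"
      using norm_infsum_bound[of "\<lambda>l. NN B j l * u l" UNIV] Ya[of j] infsumI[OF Yh[of j]]
      by (simp add: abs_mult NNnn)
    also have "\<dots> = (\<Sum>\<^sub>\<infinity>l. NN B j l * \<bar>u l\<bar>)" by (simp add: abs_mult NNnn)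
    finally have "P i j * \<bar>Y j\<bar> \<le> P i j * (\<Sum>\<^sub>\<infinity>l. NN B j l * \<bar>u l\<bar>)" by (rule mult_left_mono) (simp add: Pnn)
    also have "\<dots> = (\<Sum>\<^sub>\<infinity>l. \<bar>F j l\<bar>)" unfolding aF by (simp add: infsum_cmult_right')
    finally show "P i j * \<bar>Y j\<bar> \<le> (\<Sum>\<^sub>\<infinity>l. \<bar>F j l\<bar>)" .
    show "0 \<le> P i j * \<bar>Y j\<bar>" by (simp add: Pnn)
  qed
qed

end



context mc2 begin

lemma K3:
  fixes h :: "'a \<Rightarrow> real"
  assumes hBs: "\<And>j. j \<in> B \<Longrightarrow> (\<lambda>k. W j k * h k) summable_on A"
    and RS: "(\<lambda>k. (W i k - (if i \<in> B then P i k else 0)) * \<bar>h k\<bar>) summable_on A"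
  defines "V \<equiv> \<lambda>j. \<Sum>\<^sub>\<infinity>k\<in>A. W j k * h k"
  shows "((\<lambda>j. P i j * V j) has_sum (\<Sum>\<^sub>\<infinity>k\<in>A. (W i k - (if i \<in> B then P i k else 0)) * h k)) B"
    "(\<lambda>j. P i j * \<bar>V j\<bar>) summable_on B"
proof -
  define c where "c k = W i k - (if i \<in> B then P i k else 0)" for k
  define F where "F = (\<lambda>j k. P i j * W j k * h k)"
  have Wa: "(\<lambda>k. W j k * \<bar>h k\<bar>) summable_on A" if "j \<in> B" for j
    using hBs[OF that] summable_on_iff_abs_summable_on_real[of "\<lambda>k. W j k * h k" A]
    by (simp add: abs_mult W_nn)
  have aF: "\<bar>F j k\<bar> = P i j * (W j k * \<bar>h k\<bar>)" for j k by (simp add: F_def abs_mult Pnn W_nn)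
  have i_: "(\<lambda>k. \<bar>F j k\<bar>) summable_on A" if "j \<in> B" for j
    unfolding aF by (rule summable_on_cmult_right[OF Wa[OF that]])
  have inner: "((\<lambda>j. P i j * W j k * \<bar>h k\<bar>) has_sum c k * \<bar>h k\<bar>) B" if "k \<in> A" for k
    using has_sum_cmult_left[OF K1[OF that, of i], of "\<bar>h k\<bar>"] by (simp add: c_def)
  have outer: "((\<lambda>k. c k * \<bar>h k\<bar>) has_sum (\<Sum>\<^sub>\<infinity>k\<in>A. c k * \<bar>h k\<bar>)) A"
    using RS by (simp add: c_def has_sum_infsum)
  have T: "((\<lambda>j. \<Sum>\<^sub>\<infinity>k\<in>A. P i j * W j k * \<bar>h k\<bar>) has_sum (\<Sum>\<^sub>\<infinity>k\<in>A. c k * \<bar>h k\<bar>)) B"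
    by (rule tonelli(2)[OF _ inner outer]) (auto intro!: mult_nonneg_nonneg Pnn W_nn)
  have o_: "(\<lambda>j. \<Sum>\<^sub>\<infinity>k\<in>A. \<bar>F j k\<bar>) summable_on B"
    using T by (auto simp: summable_on_def aF mult.assoc)
  have hs: "((\<lambda>k. \<Sum>\<^sub>\<infinity>j\<in>B. F j k) has_sum (\<Sum>\<^sub>\<infinity>j\<in>B. \<Sum>\<^sub>\<infinity>k\<in>A. F j k)) A"
    by (rule fub_hs[where A=B and B=A, OF i_ o_])
  have e1: "(\<Sum>\<^sub>\<infinity>j\<in>B. F j k) = c k * h k" if "k \<in> A" for k
    unfolding F_def by (simp add: infsum_cmult_left' infsumI[OF K1[OF that]] c_def)
  have "((\<lambda>k. c k * h k) has_sum (\<Sum>\<^sub>\<infinity>j\<in>B. \<Sum>\<^sub>\<infinity>k\<in>A. F j k)) A"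
    using hs by (rule has_sum_cong[THEN iffD1, rotated]) (simp add: e1)
  then have v: "(\<Sum>\<^sub>\<infinity>j\<in>B. \<Sum>\<^sub>\<infinity>k\<in>A. F j k) = (\<Sum>\<^sub>\<infinity>k\<in>A. c k * h k)" by (simp add: infsumI)
  have e2: "(\<Sum>\<^sub>\<infinity>k\<in>A. F j k) = P i j * V j" for j
    unfolding F_def V_def by (simp add: mult.assoc infsum_cmult_right')
  have "(\<lambda>j. \<Sum>\<^sub>\<infinity>k\<in>A. F j k) summable_on B" by (rule fub_o[where A=B and B=A, OF i_ o_])
  then have "((\<lambda>j. \<Sum>\<^sub>\<infinity>k\<in>A. F j k) has_sum (\<Sum>\<^sub>\<infinity>k\<in>A. c k * h k)) B" using v by (metis has_sum_infsum)
  then show "((\<lambda>j. P i j * V j) has_sum (\<Sum>\<^sub>\<infinity>k\<in>A. (W i k - (if i \<in> B then P i k else 0)) * h k)) B"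
    by (simp add: e2 c_def)
  show "(\<lambda>j. P i j * \<bar>V j\<bar>) summable_on B"
  proof (rule summable_on_comparison_test[OF o_])
    fix j assume j: "j \<in> B"
    have "\<bar>V j\<bar> \<le> (\<Sum>\<^sub>\<infinity>k\<in>A. norm (W j k * h k))"
      unfolding V_def using norm_infsum_bound[of "\<lambda>k. W j k * h k" A] Wa[OF j]
      by (simp add: abs_mult W_nn)
    also have "\<dots> = (\<Sum>\<^sub>\<infinity>k\<in>A. W j k * \<bar>h k\<bar>)" by (simp add: abs_mult W_nn)
    finally have "P i j * \<bar>V j\<bar> \<le> P i j * (\<Sum>\<^sub>\<infinity>k\<in>A. W j k * \<bar>h k\<bar>)" by (rule mult_left_mono) (simp add: Pnn)
    also have "\<dots> = (\<Sum>\<^sub>\<infinity>k\<in>A. \<bar>F j k\<bar>)" unfolding aF by (simp add: infsum_cmult_right')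
    finally show "P i j * \<bar>V j\<bar> \<le> (\<Sum>\<^sub>\<infinity>k\<in>A. \<bar>F j k\<bar>)" .
    show "0 \<le> P i j * \<bar>V j\<bar>" by (simp add: Pnn)
  qed
qed

lemma poisson:
  fixes g h :: "'a \<Rightarrow> real" and \<omega> :: real
  assumes gint: "(\<lambda>l. \<pi> l * \<bar>g l\<bar>) summable_on UNIV"
    and hA_sum: "\<And>i. i \<in> A \<Longrightarrow> (\<lambda>k. QA P A B i k * h k) summable_on A"
    and hA: "\<And>i. i \<in> A \<Longrightarrow> h i = y_vec M X g A i - \<omega> * tau_vec M X A i + (\<Sum>\<^sub>\<infinity>k\<in>A. QA P A B i k * h k)"
    and hB_sum: "\<And>i. i \<in> B \<Longrightarrow> (\<lambda>k. NBPBA P A B i k * h k) summable_on A"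
    and hB: "\<And>i. i \<in> B \<Longrightarrow> h i = y_vec M X g A i - \<omega> * tau_vec M X A i + (\<Sum>\<^sub>\<infinity>k\<in>A. NBPBA P A B i k * h k)"
  shows "(\<lambda>j. P i j * h j) summable_on UNIV \<and> h i - (\<Sum>\<^sub>\<infinity>j. P i j * h j) = g i - \<omega>"
proof -
  define Y where "Y j = y_vec M X g A j - \<omega> * tau_vec M X A j" for j
  define V where "V j = (\<Sum>\<^sub>\<infinity>k\<in>A. W j k * h k)" for j
  define c where "c k = W i k - (if i \<in> B then P i k else 0)" for k
  have QA_eq: "QA P A B i k = P i k + W i k" if "i \<in> A" "k \<in> A" for i k
  proof -
    have "(\<Sum>\<^sub>\<infinity>j\<in>B. P i j * NBPBA P A B j k) = (\<Sum>\<^sub>\<infinity>j\<in>B. P i j * W j k)"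
      by (rule infsum_cong) (simp add: NBPBA_eq)
    also have "\<dots> = W i k" using infsumI[OF K1[OF that(2), of i]] that(1) notA by auto
    finally show ?thesis by (simp add: QA_def)
  qed
  have hBs: "(\<lambda>k. W j k * h k) summable_on A" if "j \<in> B" for j
    using hB_sum[OF that] by (rule summable_on_cong[THEN iffD1, rotated]) (simp add: NBPBA_eq that)
  have hBe: "h j = Y j + V j" if "j \<in> B" for j
    using hB[OF that] by (simp add: Y_def V_def NBPBA_eq that)
  have cnn: "0 \<le> c k" if "k \<in> A" for k
    using W_nn W_ge[OF _ that, of i] by (auto simp: c_def)
  have absP: "(\<lambda>k. P i k * \<bar>h k\<bar>) summable_on A \<and> (\<lambda>k. c k * \<bar>h k\<bar>) summable_on A"
  proof (cases "i \<in> A")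
    case True
    have "(\<lambda>k. QA P A B i k * h k) summable_on A" by (rule hA_sum[OF True])
    then have Q: "(\<lambda>k. (P i k + W i k) * \<bar>h k\<bar>) summable_on A"
      using summable_on_iff_abs_summable_on_real[of "\<lambda>k. QA P A B i k * h k" A]
      by (auto simp: abs_mult QA_eq[OF True] Pnn W_nn intro: summable_on_cong[THEN iffD1, rotated])
    have ciA: "c k = W i k" for k using True AB(1) by (auto simp: c_def)
    have l1: "P i k * \<bar>h k\<bar> \<le> (P i k + W i k) * \<bar>h k\<bar>" for k
      by (rule mult_right_mono) (simp_all add: W_nn)
    have l2: "c k * \<bar>h k\<bar> \<le> (P i k + W i k) * \<bar>h k\<bar>" for k
      unfolding ciA by (rule mult_right_mono) (simp_all add: Pnn)
    have "(\<lambda>k. P i k * \<bar>h k\<bar>) summable_on A"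
      by (rule summable_on_comparison_test[OF Q l1]) (simp add: Pnn)
    moreover have "(\<lambda>k. c k * \<bar>h k\<bar>) summable_on A"
      by (rule summable_on_comparison_test[OF Q l2]) (simp add: ciA W_nn)
    ultimately show ?thesis by blast
  next
    case False
    then have iB: "i \<in> B" using notA by auto
    have Q: "(\<lambda>k. W i k * \<bar>h k\<bar>) summable_on A"
      using hBs[OF iB] summable_on_iff_abs_summable_on_real[of "\<lambda>k. W i k * h k" A]
      by (simp add: abs_mult W_nn)
    have l1: "P i k * \<bar>h k\<bar> \<le> W i k * \<bar>h k\<bar>" if "k \<in> A" for k
      by (rule mult_right_mono) (simp_all add: W_ge[OF iB that])
    have l2: "c k * \<bar>h k\<bar> \<le> W i k * \<bar>h k\<bar>" for k
      by (rule mult_right_mono) (simp_all add: c_def iB Pnn)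
    have "(\<lambda>k. P i k * \<bar>h k\<bar>) summable_on A"
      by (rule summable_on_comparison_test[OF Q l1]) (simp_all add: Pnn)
    moreover have "(\<lambda>k. c k * \<bar>h k\<bar>) summable_on A"
      by (rule summable_on_comparison_test[OF Q l2]) (simp add: cnn)
    ultimately show ?thesis by blast
  qed
  have PAs: "(\<lambda>k. P i k * h k) summable_on A"
    using absP summable_on_iff_abs_summable_on_real[of "\<lambda>k. P i k * h k" A] by (simp add: abs_mult Pnn)
  have cs: "(\<lambda>k. c k * h k) summable_on A"
  proof -
    have "(\<lambda>k. norm (c k * h k)) summable_on A"
      using absP by (rule summable_on_cong[THEN iffD1, rotated, OF conjunct2]) (simp add: abs_mult cnn)
    then show ?thesis using summable_on_iff_abs_summable_on_real by blast
  qed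
  define SA where "SA = (\<Sum>\<^sub>\<infinity>k\<in>A. P i k * h k)"
  define R where "R = (\<Sum>\<^sub>\<infinity>k\<in>A. c k * h k)"
  have hY: "((\<lambda>j. P i j * Y j) has_sum Y i - (g i - \<omega>)) B"
    using K2(1)[OF gint, of i \<omega>] by (simp add: Y_def)
  have hV: "((\<lambda>j. P i j * V j) has_sum R) B"
    using K3(1)[OF hBs, of i] absP by (simp add: V_def R_def c_def)
  have hBsum: "((\<lambda>j. P i j * h j) has_sum (Y i - (g i - \<omega>)) + R) B"
    using has_sum_add[OF hY hV] by (rule has_sum_cong[THEN iffD1, rotated]) (simp add: hBe distrib_left)
  have hAsum: "((\<lambda>j. P i j * h j) has_sum SA) A" unfolding SA_def using PAs by (rule has_sum_infsum)
  have U: "((\<lambda>j. P i j * h j) has_sum SA + ((Y i - (g i - \<omega>)) + R)) UNIV"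
    using has_sum_Un_disjoint[OF hAsum hBsum AB(1)] AB(2) by simp
  have hi: "h i = Y i + SA + R"
  proof (cases "i \<in> A")
    case True
    have "(\<Sum>\<^sub>\<infinity>k\<in>A. QA P A B i k * h k) = (\<Sum>\<^sub>\<infinity>k\<in>A. P i k * h k + c k * h k)"
      using True AB(1) by (intro infsum_cong) (auto simp: QA_eq c_def algebra_simps)
    also have "\<dots> = SA + R" unfolding SA_def R_def by (rule infsum_add[OF PAs cs])
    finally show ?thesis using hA[OF True] by (simp add: Y_def)
  next
    case False
    then have iB: "i \<in> B" using notA by auto
    have "V i = (\<Sum>\<^sub>\<infinity>k\<in>A. P i k * h k + c k * h k)"
      unfolding V_def by (rule infsum_cong) (simp add: c_def iB algebra_simps)
    also have "\<dots> = SA + R" unfolding SA_def R_def by (rule infsum_add[OF PAs cs])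
    finally show ?thesis using hBe[OF iB] by simp
  qed
  show ?thesis
  proof
    show "(\<lambda>j. P i j * h j) summable_on UNIV" using U by (auto simp: summable_on_def)
    show "h i - (\<Sum>\<^sub>\<infinity>j. P i j * h j) = g i - \<omega>" using infsumI[OF U] hi by simp
  qed
qed

end

theorem theorem2p5:
  fixes P :: "'a::countable \<Rightarrow> 'a \<Rightarrow> real"
    and \<pi> g h :: "'a \<Rightarrow> real"
    and M :: "'a \<Rightarrow> 'w measure"
    and X :: "nat \<Rightarrow> 'w \<Rightarrow> 'a"
    and A B :: "'a set"
  assumes stoch: "stochastic_matrix P"
    and chain: "\<And>i. markov_chain_from P (M i) X i"
    and irred: "irreducible_matrix P"
    and posrec: "positive_recurrent M X"
    and inv: "invariant_distribution P \<pi>"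
    and gint: "(\<lambda>i. \<pi> i * \<bar>g i\<bar>) summable_on UNIV"
    and AB: "A \<inter> B = {}" "A \<union> B = UNIV" "A \<noteq> {}" "B \<noteq> {}"
    and hA_sum: "\<And>i. i \<in> A \<Longrightarrow> (\<lambda>k. QA P A B i k * h k) summable_on A"
    and hA: "\<And>i. i \<in> A \<Longrightarrow> h i = y_vec M X g A i - (\<Sum>\<^sub>\<infinity>j. \<pi> j * g j) * tau_vec M X A i
                                   + (\<Sum>\<^sub>\<infinity>k\<in>A. QA P A B i k * h k)"
    and hB_sum: "\<And>i. i \<in> B \<Longrightarrow> (\<lambda>k. NBPBA P A B i k * h k) summable_on A"
    and hB: "\<And>i. i \<in> B \<Longrightarrow> h i = y_vec M X g A i - (\<Sum>\<^sub>\<infinity>j. \<pi> j * g j) * tau_vec M X A i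
                                   + (\<Sum>\<^sub>\<infinity>k\<in>A. NBPBA P A B i k * h k)"
  shows "\<forall>i. (\<lambda>j. P i j * h j) summable_on UNIV \<and>
             h i - (\<Sum>\<^sub>\<infinity>j. P i j * h j) = g i - (\<Sum>\<^sub>\<infinity>j. \<pi> j * g j)"
proof -
  interpret mc2 P M X A B \<pi>
    by unfold_locales (use stoch chain AB inv irred in auto)
  show ?thesis
    using poisson[OF gint hA_sum hA hB_sum hB] by blast
qed


end
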